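(* Within the pseudovariety $\mathsf M$ of all finite monoids, the pseudoidentity $x^\omega=1$ is h-strong.
   Context: $\mathsf M$ is the pseudovariety of finite monoids (signature: multiplication and $1$); $\Omega_A\mathsf M$ is the free profinite monoid on a finite set $A$; in a profinite monoid $x^\omega=\lim x^{n!}$. An $\mathsf M$-pseudoidentity is $u=v$ with $u,v\in\Omega_B\mathsf M$, $B$ finite; it holds in a finite monoid $T$ if both sides agree under every continuous homomorphism $\Omega_B\mathsf M\to T$; $[\![\Sigma]\!]$ is the class of finite monoids satisfying $\Sigma$. Provability: for finite $A$, $\Sigma_0\subseteq\Omega_A\mathsf M\times\Omega_A\mathsf M$ is the set of pairs $(\mathbf t(\varphi(u),w_1,\dots,w_n),\mathbf t(\varphi(v),w_1,\dots,w_n))$ with $u=v$ or $v=u$ in $\Sigma$ ($u,v\in\Omega_B\mathsf M$), $\varphi:\Omega_B\mathsf M\to\Omega_A\mathsf M$ a continuous homomorphism, $\mathbf t$ a monoid term, $w_i\in\Omega_A\mathsf M$; $\Sigma_{2\alpha+1}$ is the transitive closure of $\Sigma_{2\alpha}$, $\Sigma_{2\alpha+2}$ the topological closure of $\Sigma_{2\alpha+1}$, unions at limit ordinals; $u=v$ is provable from $\Sigma$ if $(u,v)\in\bigcup_\alpha\Sigma_\alpha$. A pseudoidentity $\varepsilon$ is h-strong within $\mathsf M$ if every $\mathsf M$-pseudoidentity valid in $[\![\{\varepsilon\}]\!]$ is provable from $\{\varepsilon\}$. *)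

theory Defs
  imports "HOL-Algebra.Group"
begin

text \<open>Finite monoids are represented as HOL-Algebra monoids with carrier a subset of nat
  (every finite monoid is isomorphic to one of these).  Elements of the free profinite
  monoid on a finite set A are represented as implicit operations: families, indexed by
  finite monoids T, of maps (A \<rightarrow> T) \<rightarrow> T, natural w.r.t. monoid homomorphisms.\<close>

type_synonym 'a io = "nat monoid \<Rightarrow> ('a \<Rightarrow> nat) \<Rightarrow> nat"

definition finmon :: "nat monoid set" where
  "finmon = {T. monoid T \<and> finite (carrier T)}"

definition mhom :: "nat monoid \<Rightarrow> nat monoid \<Rightarrow> (nat \<Rightarrow> nat) set" where
  "mhom S T = {h. h \<in> carrier S \<rightarrow> carrier T \<and> h \<one>\<^bsub>S\<^esub> = \<one>\<^bsub>T\<^esub> \<and>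
     (\<forall>x\<in>carrier S. \<forall>y\<in>carrier S. h (x \<otimes>\<^bsub>S\<^esub> y) = h x \<otimes>\<^bsub>T\<^esub> h y)}"

definition valid_asg :: "'a set \<Rightarrow> nat monoid \<Rightarrow> ('a \<Rightarrow> nat) \<Rightarrow> bool" where
  "valid_asg A T f \<longleftrightarrow> T \<in> finmon \<and> f \<in> A \<rightarrow>\<^sub>E carrier T"

definition Omega :: "'a set \<Rightarrow> 'a io set" where
  "Omega A = {u. (\<forall>T f. \<not> valid_asg A T f \<longrightarrow> u T f = undefined)
     \<and> (\<forall>T f. valid_asg A T f \<longrightarrow> u T f \<in> carrier T)
     \<and> (\<forall>S\<in>finmon. \<forall>T\<in>finmon. \<forall>h\<in>mhom S T. \<forall>f\<in>A \<rightarrow>\<^sub>E carrier S.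
           u T (restrict (h \<circ> f) A) = h (u S f))}"

definition gen :: "'a set \<Rightarrow> 'a \<Rightarrow> 'a io" where
  "gen A a = (\<lambda>T f. if valid_asg A T f then f a else undefined)"

definition ione :: "'a set \<Rightarrow> 'a io" where
  "ione A = (\<lambda>T f. if valid_asg A T f then \<one>\<^bsub>T\<^esub> else undefined)"

definition imult :: "'a set \<Rightarrow> 'a io \<Rightarrow> 'a io \<Rightarrow> 'a io" where
  "imult A u v = (\<lambda>T f. if valid_asg A T f then u T f \<otimes>\<^bsub>T\<^esub> v T f else undefined)"

definition ipow :: "'a set \<Rightarrow> 'a io \<Rightarrow> nat \<Rightarrow> 'a io" where
  "ipow A u n = (imult A u ^^ n) (ione A)"

text \<open>Profinite topology: the sets {v. \<forall>T\<in>Ts. v T = u T} (Ts a finite set of finite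
  monoids) form a neighbourhood base of u.\<close>
definition agree_on :: "nat monoid set \<Rightarrow> 'a io \<Rightarrow> 'a io \<Rightarrow> bool" where
  "agree_on Ts u v \<longleftrightarrow> (\<forall>T\<in>Ts. u T = v T)"

definition fin_tests :: "nat monoid set set" where
  "fin_tests = {Ts. finite Ts \<and> Ts \<subseteq> finmon}"

definition omega :: "'a set \<Rightarrow> 'a io \<Rightarrow> 'a io" where
  "omega A u = (THE w. w \<in> Omega A \<and>
     (\<forall>Ts\<in>fin_tests. \<forall>\<^sub>F n in sequentially. agree_on Ts (ipow A u (fact n)) w))"

definition cont_hom :: "'b set \<Rightarrow> 'a set \<Rightarrow> ('b io \<Rightarrow> 'a io) \<Rightarrow> bool" where
  "cont_hom B A \<phi> \<longleftrightarrow> (\<forall>u\<in>Omega B. \<phi> u \<in> Omega A)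
     \<and> (\<forall>u\<in>Omega B. \<forall>v\<in>Omega B. \<phi> (imult B u v) = imult A (\<phi> u) (\<phi> v))
     \<and> \<phi> (ione B) = ione A
     \<and> (\<forall>u\<in>Omega B. \<forall>S g. \<exists>Ts\<in>fin_tests. \<forall>v\<in>Omega B.
           agree_on Ts v u \<longrightarrow> \<phi> v S g = \<phi> u S g)"

definition cont_hom_fin :: "'b set \<Rightarrow> nat monoid \<Rightarrow> ('b io \<Rightarrow> nat) \<Rightarrow> bool" where
  "cont_hom_fin B T \<psi> \<longleftrightarrow> (\<forall>u\<in>Omega B. \<psi> u \<in> carrier T)
     \<and> (\<forall>u\<in>Omega B. \<forall>v\<in>Omega B. \<psi> (imult B u v) = \<psi> u \<otimes>\<^bsub>T\<^esub> \<psi> v)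
     \<and> \<psi> (ione B) = \<one>\<^bsub>T\<^esub>
     \<and> (\<forall>u\<in>Omega B. \<exists>Ts\<in>fin_tests. \<forall>v\<in>Omega B. agree_on Ts v u \<longrightarrow> \<psi> v = \<psi> u)"

type_synonym 'b pseudoid = "'b set \<times> 'b io \<times> 'b io"

definition holds_in :: "nat monoid \<Rightarrow> 'b pseudoid \<Rightarrow> bool" where
  "holds_in T e = (case e of (B, u, v) \<Rightarrow>
     \<forall>\<psi>. cont_hom_fin B T \<psi> \<longrightarrow> \<psi> u = \<psi> v)"

definition models :: "'b pseudoid set \<Rightarrow> nat monoid set" where
  "models \<Sigma> = {T\<in>finmon. \<forall>e\<in>\<Sigma>. holds_in T e}"

text \<open>Value of a monoid term t(x, w_1, ..., w_n): a word over the variables, written as a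
  list where None stands for x and Some w for an occurrence of the substituted w_i.\<close>
definition ifill :: "'a set \<Rightarrow> 'a io option list \<Rightarrow> 'a io \<Rightarrow> 'a io" where
  "ifill A c p = foldr (imult A) (map (case_option p id) c) (ione A)"

definition Sigma0 :: "'a set \<Rightarrow> 'b pseudoid set \<Rightarrow> ('a io \<times> 'a io) set" where
  "Sigma0 A \<Sigma> = {(ifill A c (\<phi> u), ifill A c (\<phi> v)) | c \<phi> B u v.
      ((B, u, v) \<in> \<Sigma> \<or> (B, v, u) \<in> \<Sigma>) \<and> cont_hom B A \<phi>
      \<and> (\<forall>w. Some w \<in> set c \<longrightarrow> w \<in> Omega A)}"

definition tclosure :: "'a set \<Rightarrow> ('a io \<times> 'a io) set \<Rightarrow> ('a io \<times> 'a io) set" where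
  "tclosure A R = {(s, t). s \<in> Omega A \<and> t \<in> Omega A \<and>
     (\<forall>Ts\<in>fin_tests. \<exists>(s', t')\<in>R. agree_on Ts s' s \<and> agree_on Ts t' t)}"

text \<open>The union of the transfinite sequence \<Sigma>_\<alpha> is the least relation containing \<Sigma>_0
  that is transitive and topologically closed.\<close>
definition provable :: "'a set \<Rightarrow> 'b pseudoid set \<Rightarrow> ('a io \<times> 'a io) set" where
  "provable A \<Sigma> = \<Inter>{R. Sigma0 A \<Sigma> \<subseteq> R \<and> trans R \<and> tclosure A R \<subseteq> R}"

definition h_strong :: "'b pseudoid \<Rightarrow> 'a itself \<Rightarrow> bool" where
  "h_strong e _ \<longleftrightarrow> (\<forall>(A::'a set) s t. finite A \<and> s \<in> Omega A \<and> t \<in> Omega A \<and>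
      (\<forall>T\<in>models {e}. holds_in T (A, s, t)) \<longrightarrow> (s, t) \<in> provable A {e})"

text \<open>The pseudoidentity x^\<omega> = 1 over B = {x} (x the unique element of unit).\<close>
definition eps_omega :: "unit pseudoid" where
  "eps_omega = (UNIV, omega UNIV (gen UNIV ()), ione UNIV)"

end

theory Submission
  imports Defs
begin


definition pw :: "nat monoid \<Rightarrow> nat \<Rightarrow> nat" where
  "pw T x = x [^]\<^bsub>T\<^esub> (fact (card (carrier T)) :: nat)"

lemma (in monoid) pow_period:
  assumes x: "x \<in> carrier G" and eq: "x [^] i = x [^] (j::nat)" and ij: "i < j" and m: "i \<le> m"
  shows "x [^] (m + c * (j - i)) = x [^] m"
proof (induction c)
  case 0 then show ?case by simp
next
  case (Suc c)
  define d where "d = j - i"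
  have e1: "m + Suc c * d = (m + c * d - i) + j" using ij m unfolding d_def by simp
  have e2: "m + c * d = (m + c * d - i) + i" using ij m by simp
  have "x [^] (m + Suc c * d) = x [^] (m + c * d - i) \<otimes> x [^] j"
    by (simp only: e1 nat_pow_mult x)
  also have "\<dots> = x [^] (m + c * d - i) \<otimes> x [^] i" using eq by simp
  also have "\<dots> = x [^] (m + c * d)" by (simp only: nat_pow_mult x e2[symmetric])
  finally show ?case using Suc unfolding d_def by simp
qed

lemma (in monoid) pow_pigeon:
  assumes fin: "finite (carrier G)" and x: "x \<in> carrier G"
  shows "\<exists>i j. i < j \<and> j \<le> card (carrier G) \<and> x [^] i = x [^] (j::nat)"
proof -
  have "\<not> inj_on (\<lambda>i::nat. x [^] i) {0..card (carrier G)}"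
  proof
    assume inj: "inj_on (\<lambda>i::nat. x [^] i) {0..card (carrier G)}"
    have "(\<lambda>i::nat. x [^] i) ` {0..card (carrier G)} \<subseteq> carrier G" using x by auto
    then have "card ((\<lambda>i::nat. x [^] i) ` {0..card (carrier G)}) \<le> card (carrier G)"
      by (rule card_mono[OF fin])
    with card_image[OF inj] show False by simp
  qed
  then obtain a b where "a \<le> card (carrier G)" "b \<le> card (carrier G)" "a \<noteq> b" "x [^] a = x [^] (b::nat)"
    unfolding inj_on_def by auto
  then show ?thesis
    by (metis linorder_neq_iff)
qed

lemma (in monoid) fact_pow_idem:
  assumes fin: "finite (carrier G)" and x: "x \<in> carrier G" and k: "card (carrier G) \<le> k"
  shows "x [^] (fact k :: nat) \<otimes> x [^] (fact k :: nat) = x [^] (fact k :: nat)"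
proof -
  obtain i j where ij: "i < j" "j \<le> card (carrier G)" "x [^] i = x [^] (j::nat)"
    using pow_pigeon[OF fin x] by blast
  have d: "(j - i) dvd fact k"
    using ij k by (intro dvd_fact) auto
  then obtain q where q: "fact k = q * (j - i)" by (metis dvd_div_mult_self)
  have "i \<le> fact k" using ij k fact_ge_self[of k] by linarith
  then have "x [^] (fact k + q * (j - i)) = x [^] (fact k :: nat)"
    using pow_period[OF x ij(3) ij(1)] by blast
  moreover have "x [^] (fact k :: nat) \<otimes> x [^] (fact k :: nat) = x [^] (fact k + fact k :: nat)"
    by (simp add: nat_pow_mult x)
  ultimately show ?thesis using q by simp
qed

lemma (in monoid) idem_pow_self:
  assumes p: "p \<in> carrier G" and idem: "p \<otimes> p = p" and n: "n \<ge> 1"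
  shows "p [^] (n::nat) = p"
  using n
proof (induction n)
  case 0 then show ?case by simp
next
  case (Suc n) then show ?case
    by (cases "n = 0") (auto simp: idem p)
qed

lemma (in monoid) idem_pows_eq:
  assumes x: "x \<in> carrier G" and a: "a \<ge> 1" and b: "b \<ge> 1"
    and ia: "x [^] a \<otimes> x [^] a = x [^] (a::nat)" and ib: "x [^] b \<otimes> x [^] b = x [^] (b::nat)"
  shows "x [^] a = x [^] b"
proof -
  have "x [^] a = (x [^] a) [^] b" using idem_pow_self[OF _ ia b] x by simp
  also have "\<dots> = x [^] (a * b)" by (simp add: nat_pow_pow x)
  also have "\<dots> = (x [^] b) [^] a" by (simp add: nat_pow_pow x mult.commute)
  also have "\<dots> = x [^] b" using idem_pow_self[OF _ ib a] x by simp
  finally show ?thesis .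
qed

lemma finmonD: "T \<in> finmon \<Longrightarrow> monoid T \<and> finite (carrier T)"
  by (simp add: finmon_def)

lemma card_carrier_pos: "T \<in> finmon \<Longrightarrow> card (carrier T) \<ge> 1"
proof -
  assume T: "T \<in> finmon"
  then have "\<one>\<^bsub>T\<^esub> \<in> carrier T" "finite (carrier T)" using finmonD monoid.one_closed by blast+
  then have "card (carrier T) > 0" by (auto simp: card_gt_0_iff)
  then show ?thesis by simp
qed

lemma pw_closed: "T \<in> finmon \<Longrightarrow> x \<in> carrier T \<Longrightarrow> pw T x \<in> carrier T"
  by (simp add: pw_def finmonD monoid.nat_pow_closed)

lemma pw_idem: "T \<in> finmon \<Longrightarrow> x \<in> carrier T \<Longrightarrow> pw T x \<otimes>\<^bsub>T\<^esub> pw T x = pw T x"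
  unfolding pw_def by (rule monoid.fact_pow_idem) (auto dest: finmonD)

lemma pw_unique: assumes T: "T \<in> finmon" and x: "x \<in> carrier T" and n: "n \<ge> 1"
  and idem: "x [^]\<^bsub>T\<^esub> n \<otimes>\<^bsub>T\<^esub> x [^]\<^bsub>T\<^esub> n = x [^]\<^bsub>T\<^esub> (n::nat)"
  shows "x [^]\<^bsub>T\<^esub> n = pw T x"
proof -
  have m: "monoid T" using T finmonD by blast
  have i2: "x [^]\<^bsub>T\<^esub> (fact (card (carrier T)) :: nat) \<otimes>\<^bsub>T\<^esub> x [^]\<^bsub>T\<^esub> (fact (card (carrier T)) :: nat) = x [^]\<^bsub>T\<^esub> (fact (card (carrier T)) :: nat)"
    using pw_idem[OF T x] unfolding pw_def .
  have f1: "(fact (card (carrier T)) :: nat) \<ge> 1" by (rule fact_ge_1)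
  show ?thesis unfolding pw_def by (rule monoid.idem_pows_eq[OF m x n f1 idem i2])
qed

lemma pw_fact: assumes T: "T \<in> finmon" and x: "x \<in> carrier T" and k: "card (carrier T) \<le> k"
  shows "x [^]\<^bsub>T\<^esub> (fact k :: nat) = pw T x"
proof -
  have m: "monoid T" and fin: "finite (carrier T)" using T finmonD by blast+
  show ?thesis
    by (rule pw_unique[OF T x fact_ge_1 monoid.fact_pow_idem[OF m fin x k]])
qed

lemma mhom_closed: "h \<in> mhom S T \<Longrightarrow> x \<in> carrier S \<Longrightarrow> h x \<in> carrier T"
  by (auto simp: mhom_def)
lemma mhom_one: "h \<in> mhom S T \<Longrightarrow> h \<one>\<^bsub>S\<^esub> = \<one>\<^bsub>T\<^esub>"
  by (auto simp: mhom_def)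
lemma mhom_mult: "h \<in> mhom S T \<Longrightarrow> x \<in> carrier S \<Longrightarrow> y \<in> carrier S \<Longrightarrow>
   h (x \<otimes>\<^bsub>S\<^esub> y) = h x \<otimes>\<^bsub>T\<^esub> h y"
  by (auto simp: mhom_def)

lemma mhom_pow: "h \<in> mhom S T \<Longrightarrow> monoid S \<Longrightarrow> x \<in> carrier S \<Longrightarrow>
   h (x [^]\<^bsub>S\<^esub> (n::nat)) = h x [^]\<^bsub>T\<^esub> n"
  by (induction n) (auto simp: mhom_one mhom_mult monoid.nat_pow_closed)

lemma pw_hom: assumes S: "S \<in> finmon" and T: "T \<in> finmon" and h: "h \<in> mhom S T" and x: "x \<in> carrier S"
  shows "h (pw S x) = pw T (h x)"
proof -
  have mS: "monoid S" and mT: "monoid T" using S T finmonD by auto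
  have e: "h (pw S x) = h x [^]\<^bsub>T\<^esub> (fact (card (carrier S)) :: nat)"
    unfolding pw_def using mhom_pow[OF h mS x, of "fact (card (carrier S))"] by simp
  have "h (pw S x) \<otimes>\<^bsub>T\<^esub> h (pw S x) = h (pw S x)"
    using pw_idem[OF S x] mhom_mult[OF h pw_closed[OF S x] pw_closed[OF S x]] by simp
  then have i: "h x [^]\<^bsub>T\<^esub> (fact (card (carrier S)) :: nat) \<otimes>\<^bsub>T\<^esub> h x [^]\<^bsub>T\<^esub> (fact (card (carrier S)) :: nat) = h x [^]\<^bsub>T\<^esub> (fact (card (carrier S)) :: nat)"
    by (simp only: e)
  show ?thesis using pw_unique[OF T mhom_closed[OF h x] fact_ge_1 i] e by simp
qed



lemma valid_restrict: "T \<in> finmon \<Longrightarrow> h \<in> mhom S T \<Longrightarrow> f \<in> A \<rightarrow>\<^sub>E carrier S \<Longrightarrow>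
   valid_asg A T (restrict (h \<circ> f) A)"
  by (auto simp: valid_asg_def mhom_def)

lemma validD: "valid_asg A T f \<Longrightarrow> T \<in> finmon \<and> monoid T \<and> f \<in> A \<rightarrow>\<^sub>E carrier T"
  by (auto simp: valid_asg_def finmon_def)

lemma OmegaD1: "u \<in> Omega A \<Longrightarrow> \<not> valid_asg A T f \<Longrightarrow> u T f = undefined"
  by (simp add: Omega_def)
lemma OmegaD2: "u \<in> Omega A \<Longrightarrow> valid_asg A T f \<Longrightarrow> u T f \<in> carrier T"
  by (simp add: Omega_def)
lemma OmegaD3: "u \<in> Omega A \<Longrightarrow> S \<in> finmon \<Longrightarrow> T \<in> finmon \<Longrightarrow> h \<in> mhom S T \<Longrightarrow>
   f \<in> A \<rightarrow>\<^sub>E carrier S \<Longrightarrow> u T (restrict (h \<circ> f) A) = h (u S f)"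
  unfolding Omega_def by blast
lemma OmegaI:
  assumes "\<And>T f. \<not> valid_asg A T f \<Longrightarrow> u T f = undefined"
    and "\<And>T f. valid_asg A T f \<Longrightarrow> u T f \<in> carrier T"
    and "\<And>S T h f. S \<in> finmon \<Longrightarrow> T \<in> finmon \<Longrightarrow> h \<in> mhom S T \<Longrightarrow> f \<in> A \<rightarrow>\<^sub>E carrier S \<Longrightarrow>
           u T (restrict (h \<circ> f) A) = h (u S f)"
  shows "u \<in> Omega A"
  using assms unfolding Omega_def by blast

lemma io_eqI:
  assumes "u \<in> Omega A" "v \<in> Omega A" "\<And>T f. valid_asg A T f \<Longrightarrow> u T f = v T f"
  shows "u = v"
proof (intro ext)
  fix T f show "u T f = v T f"
    using assms OmegaD1[of u A T f] OmegaD1[of v A T f] by (cases "valid_asg A T f") auto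
qed

lemma valid_in_mhom_S: "valid_asg A S f \<Longrightarrow> S \<in> finmon" by (simp add: valid_asg_def)

lemma ione_val: "valid_asg A T f \<Longrightarrow> ione A T f = \<one>\<^bsub>T\<^esub>" by (simp add: ione_def)
lemma gen_val: "valid_asg A T f \<Longrightarrow> gen A a T f = f a" by (simp add: gen_def)
lemma imult_val: "valid_asg A T f \<Longrightarrow> imult A u v T f = u T f \<otimes>\<^bsub>T\<^esub> v T f" by (simp add: imult_def)

lemma ione_Omega: "ione A \<in> Omega A"
proof (rule OmegaI)
  fix S T h f assume "S \<in> finmon" "T \<in> finmon" "h \<in> mhom S T" "f \<in> A \<rightarrow>\<^sub>E carrier S"
  then show "ione A T (restrict (h \<circ> f) A) = h (ione A S f)"
    using valid_restrict[of T h S f A] by (simp add: ione_def valid_asg_def mhom_one)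
qed (auto simp: ione_def dest!: validD intro: monoid.one_closed)

lemma gen_Omega: "a \<in> A \<Longrightarrow> gen A a \<in> Omega A"
proof (rule OmegaI)
  fix S T h f assume "a \<in> A" "S \<in> finmon" "T \<in> finmon" "h \<in> mhom S T" "f \<in> A \<rightarrow>\<^sub>E carrier S"
  then show "gen A a T (restrict (h \<circ> f) A) = h (gen A a S f)"
    using valid_restrict[of T h S f A] by (simp add: gen_def valid_asg_def)
qed (auto simp: gen_def valid_asg_def)

lemma valid_monoid: "valid_asg A T f \<Longrightarrow> monoid T"
  by (simp add: valid_asg_def finmon_def)

lemma imult_Omega: assumes u: "u \<in> Omega A" and v: "v \<in> Omega A" shows "imult A u v \<in> Omega A"
proof (rule OmegaI)
  fix S T h f assume S: "S \<in> finmon" and T: "T \<in> finmon" and h: "h \<in> mhom S T" and f: "f \<in> A \<rightarrow>\<^sub>E carrier S"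
  have vS: "valid_asg A S f" using S f by (simp add: valid_asg_def)
  show "imult A u v T (restrict (h \<circ> f) A) = h (imult A u v S f)"
    using valid_restrict[OF T h f] vS OmegaD3[OF u S T h f] OmegaD3[OF v S T h f]
      mhom_mult[OF h OmegaD2[OF u vS] OmegaD2[OF v vS]]
    by (simp add: imult_def)
next
  fix T f assume vT: "valid_asg A T f"
  show "imult A u v T f \<in> carrier T"
    using vT OmegaD2[OF u vT] OmegaD2[OF v vT] valid_monoid[OF vT] by (simp add: imult_def monoid.m_closed)
qed (auto simp: imult_def)

lemma imult_one_left: assumes u: "u \<in> Omega A" shows "imult A (ione A) u = u"
proof (rule io_eqI[OF imult_Omega[OF ione_Omega u] u])
  fix T f assume vT: "valid_asg A T f"
  show "imult A (ione A) u T f = u T f"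
    using vT OmegaD2[OF u vT] valid_monoid[OF vT] by (simp add: imult_val ione_val monoid.l_one)
qed

lemma imult_one_right: assumes u: "u \<in> Omega A" shows "imult A u (ione A) = u"
proof (rule io_eqI[OF imult_Omega[OF u ione_Omega] u])
  fix T f assume vT: "valid_asg A T f"
  show "imult A u (ione A) T f = u T f"
    using vT OmegaD2[OF u vT] valid_monoid[OF vT] by (simp add: imult_val ione_val monoid.r_one)
qed

lemma imult_assoc: assumes u: "u \<in> Omega A" and v: "v \<in> Omega A" and w: "w \<in> Omega A"
  shows "imult A (imult A u v) w = imult A u (imult A v w)"
proof (rule io_eqI[OF imult_Omega[OF imult_Omega[OF u v] w] imult_Omega[OF u imult_Omega[OF v w]]])
  fix T f assume vT: "valid_asg A T f"
  show "imult A (imult A u v) w T f = imult A u (imult A v w) T f"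
    using vT OmegaD2[OF u vT] OmegaD2[OF v vT] OmegaD2[OF w vT] valid_monoid[OF vT]
    by (simp add: imult_val monoid.m_assoc)
qed

lemma ipow_Omega: "u \<in> Omega A \<Longrightarrow> ipow A u n \<in> Omega A"
  by (induction n) (auto simp: ipow_def ione_Omega imult_Omega)

lemma ipow_val: "u \<in> Omega A \<Longrightarrow> valid_asg A T f \<Longrightarrow> ipow A u n T f = u T f [^]\<^bsub>T\<^esub> n"
proof (induction n)
  case 0 then show ?case by (simp add: ipow_def ione_val)
next
  case (Suc n)
  have "ipow A u (Suc n) T f = u T f \<otimes>\<^bsub>T\<^esub> ipow A u n T f"
    using Suc by (simp add: ipow_def imult_val)
  then show ?case using Suc monoid.nat_pow_Suc2[OF valid_monoid[OF Suc(3)] OmegaD2[OF Suc(2,3)], of n]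
    by simp
qed



definition om :: "'a set \<Rightarrow> 'a io \<Rightarrow> 'a io" where
  "om A u = (\<lambda>T f. if valid_asg A T f then pw T (u T f) else undefined)"

lemma om_Omega: assumes u: "u \<in> Omega A" shows "om A u \<in> Omega A"
proof (rule OmegaI)
  fix S T h f assume S: "S \<in> finmon" and T: "T \<in> finmon" and h: "h \<in> mhom S T" and f: "f \<in> A \<rightarrow>\<^sub>E carrier S"
  have vS: "valid_asg A S f" using S f by (simp add: valid_asg_def)
  show "om A u T (restrict (h \<circ> f) A) = h (om A u S f)"
    using valid_restrict[OF T h f] vS OmegaD3[OF u S T h f] pw_hom[OF S T h OmegaD2[OF u vS]]
    by (simp add: om_def)
next
  fix T f assume vT: "valid_asg A T f"
  show "om A u T f \<in> carrier T"
    using pw_closed[OF valid_in_mhom_S[OF vT] OmegaD2[OF u vT]] vT by (simp add: om_def)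
qed (simp add: om_def)

lemma om_conv: assumes u: "u \<in> Omega A" and Ts: "Ts \<in> fin_tests"
  shows "\<forall>\<^sub>F n in sequentially. agree_on Ts (ipow A u (fact n)) (om A u)"
proof (rule eventually_sequentiallyI)
  fix n assume n: "(\<Sum>T\<in>Ts. card (carrier T)) \<le> n"
  have fin: "finite Ts" and sub: "Ts \<subseteq> finmon" using Ts by (auto simp: fin_tests_def)
  show "agree_on Ts (ipow A u (fact n)) (om A u)"
    unfolding agree_on_def
  proof (intro ballI ext)
    fix T f assume T: "T \<in> Ts"
    have "card (carrier T) \<le> (\<Sum>T\<in>Ts. card (carrier T))" using member_le_sum[of T Ts "\<lambda>T. card (carrier T)"] T fin by simp
    then have c: "card (carrier T) \<le> n" using n by linarith
    show "ipow A u (fact n) T f = om A u T f"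
    proof (cases "valid_asg A T f")
      case True
      then show ?thesis using ipow_val[OF u True] pw_fact[OF valid_in_mhom_S[OF True] OmegaD2[OF u True] c]
        by (simp add: om_def)
    next
      case False
      then show ?thesis using OmegaD1[OF ipow_Omega[OF u] False] by (simp add: om_def)
    qed
  qed
qed

lemma conv_unique:
  assumes w1: "w1 \<in> Omega A" and w2: "w2 \<in> Omega A"
    and c1: "\<forall>Ts\<in>fin_tests. \<forall>\<^sub>F n in sequentially. agree_on Ts (ipow A u (fact n)) w1"
    and c2: "\<forall>Ts\<in>fin_tests. \<forall>\<^sub>F n in sequentially. agree_on Ts (ipow A u (fact n)) w2"
  shows "w1 = w2"
proof (intro ext)
  fix T f
  show "w1 T f = w2 T f"
  proof (cases "T \<in> finmon")
    case True
    then have "{T} \<in> fin_tests" by (simp add: fin_tests_def)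
    then have "\<forall>\<^sub>F n in sequentially. agree_on {T} (ipow A u (fact n)) w1 \<and> agree_on {T} (ipow A u (fact n)) w2"
      using c1 c2 by (simp add: eventually_conj)
    then obtain N where "\<forall>n\<ge>N. agree_on {T} (ipow A u (fact n)) w1 \<and> agree_on {T} (ipow A u (fact n)) w2"
      unfolding eventually_sequentially by blast
    then have "agree_on {T} (ipow A u (fact N)) w1" "agree_on {T} (ipow A u (fact N)) w2" by auto
    then show ?thesis by (simp add: agree_on_def)
  next
    case False
    then have "\<not> valid_asg A T f" by (simp add: valid_asg_def)
    then show ?thesis using OmegaD1[OF w1] OmegaD1[OF w2] by simp
  qed
qed

lemma omega_eq: assumes u: "u \<in> Omega A" shows "omega A u = om A u"
  unfolding omega_def
proof (rule the_equality)
  show "om A u \<in> Omega A \<and> (\<forall>Ts\<in>fin_tests. \<forall>\<^sub>F n in sequentially. agree_on Ts (ipow A u (fact n)) (om A u))"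
    using om_Omega[OF u] om_conv[OF u] by blast
next
  fix w assume "w \<in> Omega A \<and> (\<forall>Ts\<in>fin_tests. \<forall>\<^sub>F n in sequentially. agree_on Ts (ipow A u (fact n)) w)"
  then show "w = om A u"
    using conv_unique[of w A "om A u" u] om_Omega[OF u] om_conv[OF u] by blast
qed

lemma omega_Omega: "u \<in> Omega A \<Longrightarrow> omega A u \<in> Omega A"
  by (simp add: omega_eq om_Omega)

lemma omega_val: "u \<in> Omega A \<Longrightarrow> valid_asg A T f \<Longrightarrow> omega A u T f = pw T (u T f)"
  by (simp add: omega_eq om_def)

lemma omega_conv: "u \<in> Omega A \<Longrightarrow> Ts \<in> fin_tests \<Longrightarrow>
   \<forall>\<^sub>F n in sequentially. agree_on Ts (ipow A u (fact n)) (omega A u)"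
  by (simp add: omega_eq om_conv)



abbreviation "UU \<equiv> omega (UNIV::unit set) (gen UNIV ())"
abbreviation "VV \<equiv> ione (UNIV::unit set)"

definition th :: "'a set \<Rightarrow> ('a io \<times> 'a io) set" where
  "th A = provable A {eps_omega}"

definition adm :: "'a set \<Rightarrow> ('a io \<times> 'a io) set \<Rightarrow> bool" where
  "adm A R \<longleftrightarrow> Sigma0 A {eps_omega} \<subseteq> R \<and> trans R \<and> tclosure A R \<subseteq> R"

lemma tclosure_mono: "R \<subseteq> R' \<Longrightarrow> tclosure A R \<subseteq> tclosure A R'"
  unfolding tclosure_def by blast

lemma th_adm: "adm A (th A)"
proof -
  let ?F = "{R. Sigma0 A {eps_omega} \<subseteq> R \<and> trans R \<and> tclosure A R \<subseteq> R}"
  have "Sigma0 A {eps_omega} \<subseteq> \<Inter>?F" by blast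
  moreover have "trans (\<Inter>?F)" unfolding trans_def by blast
  moreover have "tclosure A (\<Inter>?F) \<subseteq> \<Inter>?F"
  proof
    fix p assume p: "p \<in> tclosure A (\<Inter>?F)"
    show "p \<in> \<Inter>?F"
    proof
      fix R assume R: "R \<in> ?F"
      then have "tclosure A (\<Inter>?F) \<subseteq> tclosure A R" by (intro tclosure_mono) blast
      then show "p \<in> R" using p R by blast
    qed
  qed
  ultimately show ?thesis unfolding adm_def th_def provable_def by blast
qed

lemma th_least: "adm A R \<Longrightarrow> th A \<subseteq> R"
  unfolding adm_def th_def provable_def by blast

lemma th_trans: "(x, y) \<in> th A \<Longrightarrow> (y, z) \<in> th A \<Longrightarrow> (x, z) \<in> th A"
  using th_adm[of A] unfolding adm_def trans_def by blast

lemma th_closed: "(x, y) \<in> tclosure A (th A) \<Longrightarrow> (x, y) \<in> th A"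
  using th_adm[of A] unfolding adm_def by blast

lemma th_Sigma0: "p \<in> Sigma0 A {eps_omega} \<Longrightarrow> p \<in> th A"
  using th_adm[of A] unfolding adm_def by blast

lemma Sigma0E:
  assumes "(x, y) \<in> Sigma0 A {eps_omega}"
  obtains c \<phi> where "cont_hom UNIV A \<phi>" "\<forall>w. Some w \<in> set c \<longrightarrow> w \<in> Omega A"
    "(x = ifill A c (\<phi> UU) \<and> y = ifill A c (\<phi> VV)) \<or> (x = ifill A c (\<phi> VV) \<and> y = ifill A c (\<phi> UU))"
proof -
  have "\<exists>c \<phi> B u v. (x, y) = (ifill A c (\<phi> u), ifill A c (\<phi> v)) \<and>
      ((B, u, v) \<in> {eps_omega} \<or> (B, v, u) \<in> {eps_omega}) \<and> cont_hom B A \<phi>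
      \<and> (\<forall>w. Some w \<in> set c \<longrightarrow> w \<in> Omega A)"
    using assms unfolding Sigma0_def by (simp only: mem_Collect_eq)
  then obtain c where "\<exists>\<phi> B u v. (x, y) = (ifill A c (\<phi> u), ifill A c (\<phi> v)) \<and>
      ((B, u, v) \<in> {eps_omega} \<or> (B, v, u) \<in> {eps_omega}) \<and> cont_hom B A \<phi>
      \<and> (\<forall>w. Some w \<in> set c \<longrightarrow> w \<in> Omega A)" ..
  then obtain \<phi> where "\<exists>B u v. (x, y) = (ifill A c (\<phi> u), ifill A c (\<phi> v)) \<and>
      ((B, u, v) \<in> {eps_omega} \<or> (B, v, u) \<in> {eps_omega}) \<and> cont_hom B A \<phi>
      \<and> (\<forall>w. Some w \<in> set c \<longrightarrow> w \<in> Omega A)" ..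
  then obtain B where "\<exists>u v. (x, y) = (ifill A c (\<phi> u), ifill A c (\<phi> v)) \<and>
      ((B, u, v) \<in> {eps_omega} \<or> (B, v, u) \<in> {eps_omega}) \<and> cont_hom B A \<phi>
      \<and> (\<forall>w. Some w \<in> set c \<longrightarrow> w \<in> Omega A)" ..
  then obtain u where "\<exists>v. (x, y) = (ifill A c (\<phi> u), ifill A c (\<phi> v)) \<and>
      ((B, u, v) \<in> {eps_omega} \<or> (B, v, u) \<in> {eps_omega}) \<and> cont_hom B A \<phi>
      \<and> (\<forall>w. Some w \<in> set c \<longrightarrow> w \<in> Omega A)" ..
  then obtain v where H: "(x, y) = (ifill A c (\<phi> u), ifill A c (\<phi> v)) \<and>
      ((B, u, v) \<in> {eps_omega} \<or> (B, v, u) \<in> {eps_omega}) \<and> cont_hom B A \<phi>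
      \<and> (\<forall>w. Some w \<in> set c \<longrightarrow> w \<in> Omega A)" ..
  note e = H[THEN conjunct1] and bu = H[THEN conjunct2, THEN conjunct1]
    and ch = H[THEN conjunct2, THEN conjunct2, THEN conjunct1]
    and cw = H[THEN conjunct2, THEN conjunct2, THEN conjunct2]
  have xy: "x = ifill A c (\<phi> u)" "y = ifill A c (\<phi> v)" using e by simp_all
  from bu have bb: "B = UNIV \<and> ((u = UU \<and> v = VV) \<or> (u = VV \<and> v = UU))"
    unfolding eps_omega_def singleton_iff prod.inject by blast
  then have ch': "cont_hom UNIV A \<phi>" using ch by simp
  from bb have "(u = UU \<and> v = VV) \<or> (u = VV \<and> v = UU)" by blast
  then show ?thesis
  proof (elim disjE conjE)
    assume "u = UU" "v = VV" then show ?thesis using that[OF ch' cw] xy by blast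
  next
    assume "u = VV" "v = UU" then show ?thesis using that[OF ch' cw] xy by blast
  qed
qed

lemma Sigma0I1: assumes "cont_hom UNIV A \<phi>" "\<forall>w. Some w \<in> set c \<longrightarrow> w \<in> Omega A"
  shows "(ifill A c (\<phi> UU), ifill A c (\<phi> VV)) \<in> Sigma0 A {eps_omega}"
  unfolding Sigma0_def
  apply (rule CollectI)
  apply (rule exI[of _ c], rule exI[of _ \<phi>], rule exI[of _ UNIV], rule exI[of _ UU], rule exI[of _ VV])
  using assms by (simp add: eps_omega_def)

lemma Sigma0I2: assumes "cont_hom UNIV A \<phi>" "\<forall>w. Some w \<in> set c \<longrightarrow> w \<in> Omega A"
  shows "(ifill A c (\<phi> VV), ifill A c (\<phi> UU)) \<in> Sigma0 A {eps_omega}"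
  unfolding Sigma0_def
  apply (rule CollectI)
  apply (rule exI[of _ c], rule exI[of _ \<phi>], rule exI[of _ UNIV], rule exI[of _ VV], rule exI[of _ UU])
  using assms by (simp add: eps_omega_def)

lemma Sigma0_sym: assumes "(x, y) \<in> Sigma0 A {eps_omega}" shows "(y, x) \<in> Sigma0 A {eps_omega}"
  using assms
proof (rule Sigma0E)
  fix c \<phi> assume "cont_hom UNIV A \<phi>" "\<forall>w. Some w \<in> set c \<longrightarrow> w \<in> Omega A"
    "(x = ifill A c (\<phi> UU) \<and> y = ifill A c (\<phi> VV)) \<or> (x = ifill A c (\<phi> VV) \<and> y = ifill A c (\<phi> UU))"
  then show ?thesis using Sigma0I1[of A \<phi> c] Sigma0I2[of A \<phi> c] by auto
qed

lemma UU_Omega: "UU \<in> Omega UNIV" by (simp add: omega_Omega gen_Omega)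

lemma cont_hom_Omega: "cont_hom B A \<phi> \<Longrightarrow> u \<in> Omega B \<Longrightarrow> \<phi> u \<in> Omega A"
  by (simp add: cont_hom_def)

lemma ifill_Omega: "p \<in> Omega A \<Longrightarrow> \<forall>w. Some w \<in> set c \<longrightarrow> w \<in> Omega A \<Longrightarrow> ifill A c p \<in> Omega A"
  unfolding ifill_def
  by (induction c) (auto simp: ione_Omega imult_Omega split: option.split)

lemma ifill_Cons: "ifill A (Some w # c) p = imult A w (ifill A c p)"
  by (simp add: ifill_def)

lemma ifill_append: "p \<in> Omega A \<Longrightarrow> \<forall>w. Some w \<in> set c1 \<longrightarrow> w \<in> Omega A \<Longrightarrow>
   \<forall>w. Some w \<in> set c2 \<longrightarrow> w \<in> Omega A \<Longrightarrow>
   ifill A (c1 @ c2) p = imult A (ifill A c1 p) (ifill A c2 p)"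
proof (induction c1)
  case Nil then show ?case by (simp add: ifill_def imult_one_left[OF ifill_Omega[unfolded ifill_def]])
next
  case (Cons a c1)
  have IH: "ifill A (c1 @ c2) p = imult A (ifill A c1 p) (ifill A c2 p)" using Cons by simp
  have a: "case_option p id a \<in> Omega A" using Cons(2,3) by (cases a) auto
  have "ifill A ((a # c1) @ c2) p = imult A (case_option p id a) (ifill A (c1 @ c2) p)"
    by (simp add: ifill_def)
  also have "\<dots> = imult A (imult A (case_option p id a) (ifill A c1 p)) (ifill A c2 p)"
    using IH a Cons(2,3,4) by (simp add: imult_assoc ifill_Omega)
  also have "imult A (case_option p id a) (ifill A c1 p) = ifill A (a # c1) p"
    by (simp add: ifill_def)
  finally show ?case .
qed

lemma Sigma0_Omega: assumes "(x, y) \<in> Sigma0 A {eps_omega}" shows "x \<in> Omega A \<and> y \<in> Omega A"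
  using assms
proof (rule Sigma0E)
  fix c \<phi> assume ch: "cont_hom UNIV A \<phi>" and cw: "\<forall>w. Some w \<in> set c \<longrightarrow> w \<in> Omega A"
    and alt: "(x = ifill A c (\<phi> UU) \<and> y = ifill A c (\<phi> VV)) \<or> (x = ifill A c (\<phi> VV) \<and> y = ifill A c (\<phi> UU))"
  have "\<phi> UU \<in> Omega A" "\<phi> VV \<in> Omega A" using cont_hom_Omega[OF ch] UU_Omega ione_Omega by auto
  then have "ifill A c (\<phi> UU) \<in> Omega A" "ifill A c (\<phi> VV) \<in> Omega A" using ifill_Omega cw by auto
  then show ?thesis using alt by auto
qed

lemma th_Omega: "(x, y) \<in> th A \<Longrightarrow> x \<in> Omega A \<and> y \<in> Omega A"
proof -
  have "adm A (Omega A \<times> Omega A)"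
    unfolding adm_def trans_def tclosure_def using Sigma0_Omega by fast
  then show "(x, y) \<in> th A \<Longrightarrow> x \<in> Omega A \<and> y \<in> Omega A" using th_least by blast
qed

lemma th_sym: "(x, y) \<in> th A \<Longrightarrow> (y, x) \<in> th A"
proof -
  have "adm A ((th A)\<inverse>)"
    unfolding adm_def
  proof (intro conjI)
    show "Sigma0 A {eps_omega} \<subseteq> (th A)\<inverse>"
    proof
      fix z assume z: "z \<in> Sigma0 A {eps_omega}"
      obtain a b where zab: "z = (a, b)" by (cases z)
      have "(a, b) \<in> Sigma0 A {eps_omega}" using z zab by simp
      then have "(b, a) \<in> th A" by (rule th_Sigma0[OF Sigma0_sym])
      then show "z \<in> (th A)\<inverse>" using zab by simp
    qed
    show "trans ((th A)\<inverse>)" using th_trans unfolding trans_def by blast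
    show "tclosure A ((th A)\<inverse>) \<subseteq> (th A)\<inverse>"
    proof
      fix p assume p: "p \<in> tclosure A ((th A)\<inverse>)"
      obtain s t where pst: "p = (s, t)" by (cases p)
      have sO: "s \<in> Omega A" and tO: "t \<in> Omega A"
        and ap: "\<forall>Ts\<in>fin_tests. \<exists>(s', t')\<in>(th A)\<inverse>. agree_on Ts s' s \<and> agree_on Ts t' t"
        using p unfolding pst tclosure_def by auto
      have "\<exists>(s', t')\<in>th A. agree_on Ts s' t \<and> agree_on Ts t' s" if Ts: "Ts \<in> fin_tests" for Ts
      proof -
        obtain s' t' where "(s', t') \<in> (th A)\<inverse>" "agree_on Ts s' s" "agree_on Ts t' t"
          using ap Ts by blast
        then show ?thesis by blast
      qed
      then have "(t, s) \<in> tclosure A (th A)" using sO tO unfolding tclosure_def by blast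
      then show "p \<in> (th A)\<inverse>" using th_closed pst by auto
    qed
  qed
  then show "(x, y) \<in> th A \<Longrightarrow> (y, x) \<in> th A" using th_least by blast
qed

lemma agree_on_imult: assumes "agree_on Ts x x'" "agree_on Ts y y'"
  shows "agree_on Ts (imult A x y) (imult A x' y')"
  unfolding agree_on_def imult_def
proof (intro ballI ext)
  fix T f assume T: "T \<in> Ts"
  then have "x T = x' T" "y T = y' T" using assms by (auto simp: agree_on_def)
  then show "(if valid_asg A T f then x T f \<otimes>\<^bsub>T\<^esub> y T f else undefined) =
    (if valid_asg A T f then x' T f \<otimes>\<^bsub>T\<^esub> y' T f else undefined)" by simp
qed

lemma agree_on_refl: "agree_on Ts x x" by (simp add: agree_on_def)

definition CC :: "'a set \<Rightarrow> ('a io \<times> 'a io) set" where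
  "CC A = {(x, y). x \<in> Omega A \<and> y \<in> Omega A \<and>
     (\<forall>p\<in>Omega A. \<forall>q\<in>Omega A. (imult A p (imult A x q), imult A p (imult A y q)) \<in> th A)}"

lemma CC_iff: "(x, y) \<in> CC A \<longleftrightarrow> x \<in> Omega A \<and> y \<in> Omega A \<and>
     (\<forall>p\<in>Omega A. \<forall>q\<in>Omega A. (imult A p (imult A x q), imult A p (imult A y q)) \<in> th A)"
  unfolding CC_def by simp

lemma CC_Sigma0: assumes zz: "(x, y) \<in> Sigma0 A {eps_omega}" shows "(x, y) \<in> CC A"
proof -
  have xyO: "x \<in> Omega A" "y \<in> Omega A" using Sigma0_Omega zz by auto
  have "(imult A p (imult A x q), imult A p (imult A y q)) \<in> th A" if p: "p \<in> Omega A" and q: "q \<in> Omega A" for p q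
    using zz
  proof (rule Sigma0E)
    fix c \<phi> assume ch: "cont_hom UNIV A \<phi>" and cw: "\<forall>w. Some w \<in> set c \<longrightarrow> w \<in> Omega A"
      and alt: "(x = ifill A c (\<phi> UU) \<and> y = ifill A c (\<phi> VV)) \<or> (x = ifill A c (\<phi> VV) \<and> y = ifill A c (\<phi> UU))"
    let ?c = "Some p # c @ [Some q]"
    have cw2: "\<forall>w. Some w \<in> set ?c \<longrightarrow> w \<in> Omega A" using cw p q by auto
    have e: "ifill A ?c X = imult A p (imult A (ifill A c X) q)" if X: "X \<in> Omega A" for X
    proof -
      have cq: "\<forall>w. Some w \<in> set [Some q] \<longrightarrow> w \<in> Omega A" using q by simp
      have "ifill A ?c X = imult A p (ifill A (c @ [Some q]) X)" by (simp only: ifill_Cons append_Cons)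
      also have "ifill A (c @ [Some q]) X = imult A (ifill A c X) (ifill A [Some q] X)"
        by (rule ifill_append[OF X cw cq])
      also have "ifill A [Some q] X = q" using q by (simp add: ifill_def imult_one_right)
      finally show ?thesis .
    qed
    have UO: "\<phi> UU \<in> Omega A" and VO: "\<phi> VV \<in> Omega A"
      using cont_hom_Omega[OF ch] UU_Omega ione_Omega by auto
    have s1: "(ifill A ?c (\<phi> UU), ifill A ?c (\<phi> VV)) \<in> th A"
      by (rule th_Sigma0[OF Sigma0I1[OF ch cw2]])
    have s2: "(ifill A ?c (\<phi> VV), ifill A ?c (\<phi> UU)) \<in> th A"
      by (rule th_Sigma0[OF Sigma0I2[OF ch cw2]])
    from alt show ?thesis
    proof (elim disjE conjE)
      assume "x = ifill A c (\<phi> UU)" "y = ifill A c (\<phi> VV)"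
      then show ?thesis using s1 e[OF UO] e[OF VO] by simp
    next
      assume "x = ifill A c (\<phi> VV)" "y = ifill A c (\<phi> UU)"
      then show ?thesis using s2 e[OF UO] e[OF VO] by simp
    qed
  qed
  then show ?thesis using xyO by (simp add: CC_iff)
qed

lemma CC_trans: "trans (CC A)"
proof (rule transI)
  fix x y z assume xy: "(x, y) \<in> CC A" and yz: "(y, z) \<in> CC A"
  have "(imult A p (imult A x q), imult A p (imult A z q)) \<in> th A" if "p \<in> Omega A" "q \<in> Omega A" for p q
    using xy yz that by (simp only: CC_iff) (blast intro: th_trans)
  then show "(x, z) \<in> CC A" using xy yz by (simp add: CC_iff)
qed

lemma CC_closed: "tclosure A (CC A) \<subseteq> CC A"
proof
  fix z assume z: "z \<in> tclosure A (CC A)"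
  obtain x y where zxy: "z = (x, y)" by (cases z)
  have xO: "x \<in> Omega A" and yO: "y \<in> Omega A"
    and ap: "\<forall>Ts\<in>fin_tests. \<exists>(s', t')\<in>CC A. agree_on Ts s' x \<and> agree_on Ts t' y"
    using z unfolding zxy tclosure_def by auto
  have "(imult A p (imult A x q), imult A p (imult A y q)) \<in> th A" if p: "p \<in> Omega A" and q: "q \<in> Omega A" for p q
  proof (rule th_closed)
    have "\<exists>(s', t')\<in>th A. agree_on Ts s' (imult A p (imult A x q)) \<and> agree_on Ts t' (imult A p (imult A y q))"
      if Ts: "Ts \<in> fin_tests" for Ts
    proof -
      obtain s' t' where st: "(s', t') \<in> CC A" "agree_on Ts s' x" "agree_on Ts t' y"
        using ap Ts by blast
      then have "(imult A p (imult A s' q), imult A p (imult A t' q)) \<in> th A"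
        using p q by (simp add: CC_iff)
      moreover have "agree_on Ts (imult A p (imult A s' q)) (imult A p (imult A x q))"
        "agree_on Ts (imult A p (imult A t' q)) (imult A p (imult A y q))"
        using st by (auto intro!: agree_on_imult agree_on_refl)
      ultimately show ?thesis by blast
    qed
    moreover have "imult A p (imult A x q) \<in> Omega A" "imult A p (imult A y q) \<in> Omega A"
      using p q xO yO by (auto intro: imult_Omega)
    ultimately show "(imult A p (imult A x q), imult A p (imult A y q)) \<in> tclosure A (th A)"
      unfolding tclosure_def by blast
  qed
  then show "z \<in> CC A" using zxy xO yO by (simp add: CC_iff)
qed

lemma th_cong: assumes xy: "(x, y) \<in> th A" and p: "p \<in> Omega A" and q: "q \<in> Omega A"
  shows "(imult A p (imult A x q), imult A p (imult A y q)) \<in> th A"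
proof -
  have "adm A (CC A)" unfolding adm_def
  proof (intro conjI)
    show "Sigma0 A {eps_omega} \<subseteq> CC A" using CC_Sigma0 by auto
    show "trans (CC A)" by (rule CC_trans)
    show "tclosure A (CC A) \<subseteq> CC A" by (rule CC_closed)
  qed
  then have "th A \<subseteq> CC A" by (rule th_least)
  then show ?thesis using xy p q by (auto simp: CC_iff)
qed



definition sub1 :: "'a set \<Rightarrow> 'a io \<Rightarrow> unit io \<Rightarrow> 'a io" where
  "sub1 A u0 v = (\<lambda>T f. if valid_asg A T f then v T (\<lambda>_. u0 T f) else undefined)"

lemma valid_unit: "T \<in> finmon \<Longrightarrow> x \<in> carrier T \<Longrightarrow> valid_asg (UNIV::unit set) T (\<lambda>_. x)"
  by (simp add: valid_asg_def PiE_def extensional_def)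

lemma sub1_Omega: assumes u0: "u0 \<in> Omega A" and v: "v \<in> Omega UNIV" shows "sub1 A u0 v \<in> Omega A"
proof (rule OmegaI)
  fix T f assume vT: "valid_asg A T f"
  show "sub1 A u0 v T f \<in> carrier T"
    using vT OmegaD2[OF v valid_unit[OF valid_in_mhom_S[OF vT] OmegaD2[OF u0 vT]]]
    by (simp add: sub1_def)
next
  fix S T h f assume S: "S \<in> finmon" and T: "T \<in> finmon" and h: "h \<in> mhom S T" and f: "f \<in> A \<rightarrow>\<^sub>E carrier S"
  have vS: "valid_asg A S f" using S f by (simp add: valid_asg_def)
  have c: "u0 S f \<in> carrier S" by (rule OmegaD2[OF u0 vS])
  have f': "(\<lambda>_::unit. u0 S f) \<in> UNIV \<rightarrow>\<^sub>E carrier S" using c by (simp add: PiE_def extensional_def)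
  have r: "restrict (h \<circ> (\<lambda>_::unit. u0 S f)) UNIV = (\<lambda>_. h (u0 S f))" by (simp add: restrict_def)
  show "sub1 A u0 v T (restrict (h \<circ> f) A) = h (sub1 A u0 v S f)"
    using valid_restrict[OF T h f] vS OmegaD3[OF u0 S T h f] OmegaD3[OF v S T h f'] r
    by (simp add: sub1_def)
qed (simp add: sub1_def)

lemma sub1_cont_hom: assumes u0: "u0 \<in> Omega A" shows "cont_hom UNIV A (sub1 A u0)"
  unfolding cont_hom_def
proof (intro conjI ballI allI)
  fix u :: "unit io" assume "u \<in> Omega UNIV" then show "sub1 A u0 u \<in> Omega A" by (rule sub1_Omega[OF u0])
next
  fix u v :: "unit io" assume u: "u \<in> Omega UNIV" and v: "v \<in> Omega UNIV"
  show "sub1 A u0 (imult UNIV u v) = imult A (sub1 A u0 u) (sub1 A u0 v)"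
  proof (intro ext)
    fix T f show "sub1 A u0 (imult UNIV u v) T f = imult A (sub1 A u0 u) (sub1 A u0 v) T f"
    proof (cases "valid_asg A T f")
      case True
      then have "valid_asg (UNIV::unit set) T (\<lambda>_. u0 T f)"
        using valid_unit[OF valid_in_mhom_S[OF True] OmegaD2[OF u0 True]] by simp
      then show ?thesis using True by (simp add: sub1_def imult_def)
    qed (simp add: sub1_def imult_def)
  qed
next
  show "sub1 A u0 (ione UNIV) = ione A"
  proof (intro ext)
    fix T f show "sub1 A u0 (ione UNIV) T f = ione A T f"
    proof (cases "valid_asg A T f")
      case True
      then have "valid_asg (UNIV::unit set) T (\<lambda>_. u0 T f)"
        using valid_unit[OF valid_in_mhom_S[OF True] OmegaD2[OF u0 True]] by simp
      then show ?thesis using True by (simp add: sub1_def ione_def)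
    qed (simp add: sub1_def ione_def)
  qed
next
  fix u :: "unit io" and S g assume u: "u \<in> Omega UNIV"
  show "\<exists>Ts\<in>fin_tests. \<forall>v\<in>Omega UNIV. agree_on Ts v u \<longrightarrow> sub1 A u0 v S g = sub1 A u0 u S g"
  proof (cases "S \<in> finmon")
    case True
    then have "{S} \<in> fin_tests" by (simp add: fin_tests_def)
    then show ?thesis by (intro bexI[of _ "{S}"]) (auto simp: agree_on_def sub1_def)
  next
    case False
    then have "\<not> valid_asg A S g" by (simp add: valid_asg_def)
    moreover have "{} \<in> fin_tests" by (simp add: fin_tests_def)
    ultimately show ?thesis by (intro bexI[of _ "{}"]) (auto simp: sub1_def)
  qed
qed

lemma sub1_UU: assumes u0: "u0 \<in> Omega A" shows "sub1 A u0 UU = omega A u0"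
proof (rule io_eqI[OF sub1_Omega[OF u0 UU_Omega] omega_Omega[OF u0]])
  fix T f assume vT: "valid_asg A T f"
  have v1: "valid_asg (UNIV::unit set) T (\<lambda>_. u0 T f)"
    using valid_unit[OF valid_in_mhom_S[OF vT] OmegaD2[OF u0 vT]] by simp
  show "sub1 A u0 UU T f = omega A u0 T f"
    using vT v1 by (simp add: sub1_def omega_val[OF gen_Omega] omega_val[OF u0] gen_val)
qed

lemma sub1_VV: assumes u0: "u0 \<in> Omega A" shows "sub1 A u0 VV = ione A"
proof (intro ext)
  fix T f show "sub1 A u0 (ione UNIV) T f = ione A T f"
  proof (cases "valid_asg A T f")
    case True
    then have "valid_asg (UNIV::unit set) T (\<lambda>_. u0 T f)"
      using valid_unit[OF valid_in_mhom_S[OF True] OmegaD2[OF u0 True]] by simp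
    then show ?thesis using True by (simp add: sub1_def ione_def)
  qed (simp add: sub1_def ione_def)
qed

lemma ifill_None: "X \<in> Omega A \<Longrightarrow> ifill A [None] X = X"
  by (simp add: ifill_def imult_one_right)

lemma ifill_Some: "x \<in> Omega A \<Longrightarrow> ifill A [Some x] X = x"
  by (simp add: ifill_def imult_one_right)

lemma th_omega: assumes u0: "u0 \<in> Omega A" shows "(omega A u0, ione A) \<in> th A"
proof -
  have "(ifill A [None] (sub1 A u0 UU), ifill A [None] (sub1 A u0 VV)) \<in> Sigma0 A {eps_omega}"
    by (rule Sigma0I1[OF sub1_cont_hom[OF u0]]) simp
  then show ?thesis
    using ifill_None[OF omega_Omega[OF u0]] ifill_None[OF ione_Omega[of A]]
    by (simp add: sub1_UU[OF u0] sub1_VV[OF u0] th_Sigma0)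
qed

lemma th_refl: assumes x: "x \<in> Omega A" shows "(x, x) \<in> th A"
proof -
  have "(ifill A [Some x] (sub1 A (ione A) UU), ifill A [Some x] (sub1 A (ione A) VV)) \<in> Sigma0 A {eps_omega}"
    by (rule Sigma0I1[OF sub1_cont_hom[OF ione_Omega]]) (simp add: x)
  then show ?thesis using ifill_Some[OF x, of "sub1 A (ione A) UU"] ifill_Some[OF x, of "sub1 A (ione A) VV"]
    by (simp add: th_Sigma0)
qed

lemma th_mult: assumes "(x, x') \<in> th A" "(y, y') \<in> th A"
  shows "(imult A x y, imult A x' y') \<in> th A"
proof -
  have O: "x \<in> Omega A" "x' \<in> Omega A" "y \<in> Omega A" "y' \<in> Omega A" using th_Omega assms by blast+
  have "(imult A (ione A) (imult A x y), imult A (ione A) (imult A x' y)) \<in> th A"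
    by (rule th_cong[OF assms(1) ione_Omega O(3)])
  then have 1: "(imult A x y, imult A x' y) \<in> th A" using O by (simp add: imult_one_left imult_Omega)
  have "(imult A x' (imult A y (ione A)), imult A x' (imult A y' (ione A))) \<in> th A"
    by (rule th_cong[OF assms(2) O(2) ione_Omega])
  then have 2: "(imult A x' y, imult A x' y') \<in> th A" using O by (simp add: imult_one_right)
  show ?thesis by (rule th_trans[OF 1 2])
qed



lemma eval_cont_hom_fin: assumes H: "H \<in> finmon" and g: "g \<in> A \<rightarrow>\<^sub>E carrier H"
  shows "cont_hom_fin A H (\<lambda>u. u H g)"
proof -
  have vg: "valid_asg A H g" using H g by (simp add: valid_asg_def)
  have "{H} \<in> fin_tests" using H by (simp add: fin_tests_def)
  then show ?thesis unfolding cont_hom_fin_def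
    using vg by (auto simp: OmegaD2 imult_val ione_val agree_on_def intro!: bexI[of _ "{H}"])
qed

lemma psi_ipow: assumes psi: "cont_hom_fin B H \<psi>" and u: "u \<in> Omega B" and m: "monoid H"
  shows "\<psi> (ipow B u n) = \<psi> u [^]\<^bsub>H\<^esub> n"
proof (induction n)
  case 0 then show ?case using psi by (simp add: ipow_def cont_hom_fin_def)
next
  case (Suc n)
  have "ipow B u (Suc n) = imult B u (ipow B u n)" by (simp add: ipow_def)
  then have "\<psi> (ipow B u (Suc n)) = \<psi> u \<otimes>\<^bsub>H\<^esub> \<psi> (ipow B u n)"
    using psi u ipow_Omega[OF u] by (simp add: cont_hom_fin_def)
  moreover have "\<psi> u \<in> carrier H" using psi u by (simp add: cont_hom_fin_def)
  ultimately show ?case using Suc monoid.nat_pow_Suc2[OF m, of "\<psi> u" n] by simp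
qed

lemma group_models:
  assumes H: "H \<in> finmon" and inv: "\<forall>y\<in>carrier H. \<exists>z\<in>carrier H. y \<otimes>\<^bsub>H\<^esub> z = \<one>\<^bsub>H\<^esub> \<and> z \<otimes>\<^bsub>H\<^esub> y = \<one>\<^bsub>H\<^esub>"
  shows "H \<in> models {eps_omega}"
proof -
  have m: "monoid H" and fin: "finite (carrier H)" using H finmonD by blast+
  have grp: "group H"
    unfolding group_def group_axioms_def using m inv
    by (auto simp: Units_def)
  have "holds_in H eps_omega"
    unfolding holds_in_def eps_omega_def
  proof (simp only: prod.case, intro allI impI)
    fix \<psi> assume psi: "cont_hom_fin (UNIV::unit set) H \<psi>"
    obtain Ts where Ts: "Ts \<in> fin_tests" and cont: "\<forall>v\<in>Omega UNIV. agree_on Ts v UU \<longrightarrow> \<psi> v = \<psi> UU"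
      using psi UU_Omega unfolding cont_hom_fin_def by blast
    have "\<forall>\<^sub>F n in sequentially. agree_on Ts (ipow UNIV (gen UNIV ()) (fact n)) UU \<and> card (carrier H) \<le> n"
      using omega_conv[OF gen_Omega[of "()" UNIV] Ts] eventually_ge_at_top[of "card (carrier H)"]
      by (simp add: eventually_conj)
    then obtain n where n1: "agree_on Ts (ipow UNIV (gen UNIV ()) (fact n)) UU" and n2: "card (carrier H) \<le> n"
      unfolding eventually_sequentially by blast
    have g: "gen UNIV () \<in> Omega (UNIV::unit set)" by (rule gen_Omega) simp
    have x: "\<psi> (gen UNIV ()) \<in> carrier H" using psi g by (simp add: cont_hom_fin_def)
    have "\<psi> UU = \<psi> (ipow UNIV (gen UNIV ()) (fact n))"
      using cont n1 ipow_Omega[OF g] by simp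
    also have "\<dots> = \<psi> (gen UNIV ()) [^]\<^bsub>H\<^esub> (fact n :: nat)" by (rule psi_ipow[OF psi g m])
    also have "\<dots> = \<one>\<^bsub>H\<^esub>"
    proof -
      let ?p = "\<psi> (gen UNIV ()) [^]\<^bsub>H\<^esub> (fact n :: nat)"
      have pc: "?p \<in> carrier H" using x m by (simp add: monoid.nat_pow_closed)
      have "?p \<otimes>\<^bsub>H\<^esub> ?p = ?p" by (rule monoid.fact_pow_idem[OF m fin x n2])
      then show ?thesis using group.l_cancel_one[OF grp pc pc] by simp
    qed
    also have "\<dots> = \<psi> VV" using psi by (simp add: cont_hom_fin_def)
    finally show "\<psi> UU = \<psi> VV" .
  qed
  then show ?thesis using H by (simp add: models_def)
qed



definition wd :: "'a set \<Rightarrow> 'a list \<Rightarrow> 'a io" where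
  "wd A xs = foldr (\<lambda>a acc. imult A (gen A a) acc) xs (ione A)"

lemma wd_Omega: "set xs \<subseteq> A \<Longrightarrow> wd A xs \<in> Omega A"
  by (induction xs) (auto simp: wd_def ione_Omega imult_Omega gen_Omega)

lemma wd_append: "set xs \<subseteq> A \<Longrightarrow> set ys \<subseteq> A \<Longrightarrow> wd A (xs @ ys) = imult A (wd A xs) (wd A ys)"
proof (induction xs)
  case Nil then show ?case by (simp add: wd_def imult_one_left[OF wd_Omega[unfolded wd_def]])
next
  case (Cons a xs)
  then have IH: "wd A (xs @ ys) = imult A (wd A xs) (wd A ys)" by simp
  have "wd A ((a # xs) @ ys) = imult A (gen A a) (wd A (xs @ ys))" by (simp add: wd_def)
  also have "\<dots> = imult A (imult A (gen A a) (wd A xs)) (wd A ys)"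
    using IH Cons(2,3) by (simp add: imult_assoc gen_Omega wd_Omega)
  also have "imult A (gen A a) (wd A xs) = wd A (a # xs)" by (simp add: wd_def)
  finally show ?case .
qed

lemma wd_single: "a \<in> A \<Longrightarrow> wd A [a] = gen A a"
  by (simp add: wd_def imult_one_right gen_Omega)

lemma density:
  assumes A: "finite A" and u: "u \<in> Omega A" and Ts: "Ts \<in> fin_tests"
  shows "\<exists>xs. set xs \<subseteq> A \<and> agree_on Ts (wd A xs) u"
proof -
  have finTs: "finite Ts" and subTs: "Ts \<subseteq> finmon" using Ts by (auto simp: fin_tests_def)
  define I where "I = Sigma Ts (\<lambda>T. A \<rightarrow>\<^sub>E carrier T)"
  have I_valid: "valid_asg A (fst i) (snd i)" if "i \<in> I" for i
    using that subTs unfolding I_def valid_asg_def by auto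
  have fincar: "finite (carrier T)" if "T \<in> Ts" for T using that subTs finmonD by blast
  have finI: "finite I" unfolding I_def
  proof (rule finite_SigmaI[OF finTs])
    fix T assume "T \<in> Ts"
    then show "finite (A \<rightarrow>\<^sub>E carrier T)" using A fincar by (intro finite_PiE) auto
  qed
  define val where "val xs = (\<lambda>i\<in>I. wd A xs (fst i) (snd i))" for xs
  define L where "L = {xs. set xs \<subseteq> A}"
  define V where "V = val ` L"
  have V_sub: "V \<subseteq> PiE I (\<lambda>i. carrier (fst i))"
  proof
    fix v assume "v \<in> V"
    then obtain xs where xs: "xs \<in> L" and v: "v = val xs" by (auto simp: V_def)
    have "wd A xs (fst i) (snd i) \<in> carrier (fst i)" if "i \<in> I" for i
      using OmegaD2[OF wd_Omega I_valid[OF that]] xs by (simp add: L_def)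
    then show "v \<in> PiE I (\<lambda>i. carrier (fst i))" unfolding v val_def by (simp add: PiE_iff)
  qed
  have finV: "finite V"
  proof (rule finite_subset[OF V_sub finite_PiE[OF finI]])
    fix i assume "i \<in> I" then show "finite (carrier (fst i))" using fincar by (auto simp: I_def)
  qed
  obtain enc :: "(nat monoid \<times> ('a \<Rightarrow> nat) \<Rightarrow> nat) \<Rightarrow> nat" where inj: "inj_on enc V"
    using finite_imp_inj_to_nat_seg[OF finV] by blast
  define dec where "dec = the_inv_into V enc"
  have dec_enc: "dec (enc v) = v" if "v \<in> V" for v
    unfolding dec_def using the_inv_into_f_f[OF inj that] .
  define pmul where "pmul v w = (\<lambda>i\<in>I. v i \<otimes>\<^bsub>fst i\<^esub> w i)" for v w :: "nat monoid \<times> ('a \<Rightarrow> nat) \<Rightarrow> nat"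
  have pmul_val: "pmul (val xs) (val ys) = val (xs @ ys)" if "xs \<in> L" "ys \<in> L" for xs ys
  proof (intro ext)
    fix i show "pmul (val xs) (val ys) i = val (xs @ ys) i"
      using that I_valid[of i] by (auto simp: pmul_def val_def L_def wd_append imult_val)
  qed
  have valL: "val xs \<in> V" if "xs \<in> L" for xs using that by (simp add: V_def)
  have appL: "xs @ ys \<in> L" if "xs \<in> L" "ys \<in> L" for xs ys using that by (simp add: L_def)
  define P :: "nat monoid" where "P = \<lparr>carrier = enc ` V, mult = (\<lambda>x y. enc (pmul (dec x) (dec y))), one = enc (val [])\<rparr>"
  have carP: "x \<in> carrier P \<longleftrightarrow> (\<exists>xs\<in>L. x = enc (val xs))" for x
    by (auto simp: P_def V_def)
  have multP: "enc (val xs) \<otimes>\<^bsub>P\<^esub> enc (val ys) = enc (val (xs @ ys))" if "xs \<in> L" "ys \<in> L" for xs ys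
    using that by (simp add: P_def dec_enc valL pmul_val)
  have nilL: "[] \<in> L" by (simp add: L_def)
  have oneP: "\<one>\<^bsub>P\<^esub> = enc (val [])" by (simp add: P_def)
  have mP: "monoid P"
  proof (rule monoidI)
    fix x y assume "x \<in> carrier P" "y \<in> carrier P"
    then show "x \<otimes>\<^bsub>P\<^esub> y \<in> carrier P" using carP multP appL by auto
  next
    show "\<one>\<^bsub>P\<^esub> \<in> carrier P" using carP oneP nilL by auto
  next
    fix x y z assume "x \<in> carrier P" "y \<in> carrier P" "z \<in> carrier P"
    then obtain xs ys zs where "xs \<in> L" "ys \<in> L" "zs \<in> L" "x = enc (val xs)" "y = enc (val ys)" "z = enc (val zs)"
      using carP by blast
    then show "x \<otimes>\<^bsub>P\<^esub> y \<otimes>\<^bsub>P\<^esub> z = x \<otimes>\<^bsub>P\<^esub> (y \<otimes>\<^bsub>P\<^esub> z)"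
      using multP appL by simp
  next
    fix x assume "x \<in> carrier P"
    then obtain xs where "xs \<in> L" "x = enc (val xs)" using carP by blast
    then show "\<one>\<^bsub>P\<^esub> \<otimes>\<^bsub>P\<^esub> x = x" "x \<otimes>\<^bsub>P\<^esub> \<one>\<^bsub>P\<^esub> = x"
      using multP[of "[]" xs] multP[of xs "[]"] nilL oneP by auto
  qed
  have PF: "P \<in> finmon" using mP finV by (simp add: finmon_def P_def)
  define F where "F = (\<lambda>a\<in>A. enc (val [a]))"
  have singL: "[a] \<in> L" if "a \<in> A" for a using that by (simp add: L_def)
  have FP: "F \<in> A \<rightarrow>\<^sub>E carrier P" using carP singL by (auto simp: F_def)
  have vP: "valid_asg A P F" using PF FP by (simp add: valid_asg_def)
  obtain xs where xsL: "xs \<in> L" and uPF: "u P F = enc (val xs)"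
    using OmegaD2[OF u vP] carP by blast
  have "agree_on Ts (wd A xs) u"
    unfolding agree_on_def
  proof (intro ballI ext)
    fix T f assume T: "T \<in> Ts"
    show "wd A xs T f = u T f"
    proof (cases "valid_asg A T f")
      case False
      then show ?thesis using OmegaD1[OF u False] OmegaD1[OF wd_Omega False] xsL by (simp add: L_def)
    next
      case True
      then have fT: "f \<in> A \<rightarrow>\<^sub>E carrier T" and TF: "T \<in> finmon" by (auto simp: valid_asg_def)
      define i where "i = (T, f)"
      have iI: "i \<in> I" using T fT by (simp add: i_def I_def)
      define pr where "pr x = dec x i" for x
      have pr_enc: "pr (enc (val ys)) = wd A ys T f" if "ys \<in> L" for ys
      proof -
        have "pr (enc (val ys)) = val ys i" by (simp add: pr_def dec_enc[OF valL[OF that]])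
        then show ?thesis using iI by (simp add: val_def i_def)
      qed
      have hom: "pr \<in> mhom P T"
        unfolding mhom_def
      proof (intro CollectI conjI ballI Pi_I)
        fix x assume "x \<in> carrier P"
        then obtain ys where "ys \<in> L" "x = enc (val ys)" using carP by blast
        then show "pr x \<in> carrier T" using pr_enc OmegaD2[OF wd_Omega True] by (simp add: L_def)
      next
        show "pr \<one>\<^bsub>P\<^esub> = \<one>\<^bsub>T\<^esub>" using pr_enc[OF nilL] True oneP
          by (simp add: wd_def ione_val)
      next
        fix x y assume "x \<in> carrier P" "y \<in> carrier P"
        then obtain xs' ys where "xs' \<in> L" "ys \<in> L" "x = enc (val xs')" "y = enc (val ys)" using carP by blast
        then show "pr (x \<otimes>\<^bsub>P\<^esub> y) = pr x \<otimes>\<^bsub>T\<^esub> pr y"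
          using multP pr_enc appL True by (simp add: wd_append L_def imult_val)
      qed
      have "restrict (pr \<circ> F) A = f"
      proof (intro ext)
        fix a show "restrict (pr \<circ> F) A a = f a"
        proof (cases "a \<in> A")
          case aA: True
          have Fa: "F a = enc (val [a])" using aA by (simp add: F_def)
          have "restrict (pr \<circ> F) A a = pr (F a)" using aA by simp
          also have "\<dots> = wd A [a] T f" unfolding Fa by (rule pr_enc[OF singL[OF aA]])
          also have "\<dots> = gen A a T f" by (simp only: wd_single[OF aA])
          also have "\<dots> = f a" by (rule gen_val[OF \<open>valid_asg A T f\<close>])
          finally show ?thesis .
        next
          case aA: False
          have "restrict (pr \<circ> F) A a = undefined" using aA by simp
          also have "undefined = f a" using PiE_arb[OF fT aA] by simp
          finally show ?thesis .
        qed
      qed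
      then have "u T f = pr (u P F)" using OmegaD3[OF u PF TF hom FP] by simp
      then show ?thesis using uPF pr_enc[OF xsL] by simp
    qed
  qed
  then show ?thesis using xsL by (auto simp: L_def)
qed



definition stepT :: "nat monoid \<Rightarrow> nat \<Rightarrow> nat \<Rightarrow> nat" where
  "stepT T e x = pw T (e \<otimes>\<^bsub>T\<^esub> (x \<otimes>\<^bsub>T\<^esub> e))"

definition roundT :: "nat monoid \<Rightarrow> ('a \<Rightarrow> nat) \<Rightarrow> 'a list \<Rightarrow> nat \<Rightarrow> nat" where
  "roundT T f as e = foldl (\<lambda>e a. stepT T e (f a)) e as"

definition seqT :: "nat monoid \<Rightarrow> ('a \<Rightarrow> nat) \<Rightarrow> 'a list \<Rightarrow> nat \<Rightarrow> nat" where
  "seqT T f as n = (roundT T f as ^^ n) \<one>\<^bsub>T\<^esub>"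

definition lem :: "nat monoid \<Rightarrow> nat \<Rightarrow> nat \<Rightarrow> bool" where
  "lem T a b \<longleftrightarrow> b \<otimes>\<^bsub>T\<^esub> a = a \<and> a \<otimes>\<^bsub>T\<^esub> b = a"

definition idem :: "nat monoid \<Rightarrow> nat \<Rightarrow> bool" where
  "idem T e \<longleftrightarrow> e \<in> carrier T \<and> e \<otimes>\<^bsub>T\<^esub> e = e"

lemma lem_trans: assumes m: "monoid T" and c: "a \<in> carrier T" "b \<in> carrier T" "c \<in> carrier T"
  and ab: "lem T a b" and bc: "lem T b c" shows "lem T a c"
proof -
  interpret T: monoid T by (rule m)
  have "c \<otimes>\<^bsub>T\<^esub> a = c \<otimes>\<^bsub>T\<^esub> (b \<otimes>\<^bsub>T\<^esub> a)" using ab by (simp add: lem_def)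
  also have "\<dots> = (c \<otimes>\<^bsub>T\<^esub> b) \<otimes>\<^bsub>T\<^esub> a" using c by (simp add: T.m_assoc)
  also have "\<dots> = b \<otimes>\<^bsub>T\<^esub> a" using bc by (simp add: lem_def)
  also have "\<dots> = a" using ab by (simp add: lem_def)
  finally have 1: "c \<otimes>\<^bsub>T\<^esub> a = a" .
  have "a \<otimes>\<^bsub>T\<^esub> c = (a \<otimes>\<^bsub>T\<^esub> b) \<otimes>\<^bsub>T\<^esub> c" using ab by (simp add: lem_def)
  also have "\<dots> = a \<otimes>\<^bsub>T\<^esub> (b \<otimes>\<^bsub>T\<^esub> c)" using c by (simp add: T.m_assoc)
  also have "\<dots> = a \<otimes>\<^bsub>T\<^esub> b" using bc by (simp add: lem_def)
  also have "\<dots> = a" using ab by (simp add: lem_def)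
  finally show ?thesis using 1 by (simp add: lem_def)
qed

lemma lem_antisym: assumes "lem T a b" "lem T b a" shows "a = b"
proof -
  have "a = b \<otimes>\<^bsub>T\<^esub> a" using assms(1) by (simp add: lem_def)
  also have "\<dots> = b" using assms(2) by (simp add: lem_def)
  finally show ?thesis .
qed

lemma lem_refl: "idem T e \<Longrightarrow> lem T e e"
  by (simp add: lem_def idem_def)

lemma pow_absorb_left: assumes m: "monoid T" and y: "y \<in> carrier T" and e: "e \<in> carrier T"
  and ey: "e \<otimes>\<^bsub>T\<^esub> y = y" and n: "n \<ge> 1"
  shows "e \<otimes>\<^bsub>T\<^esub> y [^]\<^bsub>T\<^esub> (n::nat) = y [^]\<^bsub>T\<^esub> n"
proof -
  interpret T: monoid T by (rule m)
  obtain k where k: "n = Suc k" using n by (cases n) auto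
  have "e \<otimes>\<^bsub>T\<^esub> y [^]\<^bsub>T\<^esub> Suc k = e \<otimes>\<^bsub>T\<^esub> (y \<otimes>\<^bsub>T\<^esub> y [^]\<^bsub>T\<^esub> k)"
    by (simp only: T.nat_pow_Suc2[OF y])
  also have "\<dots> = y \<otimes>\<^bsub>T\<^esub> y [^]\<^bsub>T\<^esub> k" using ey y e by (simp add: T.m_assoc[symmetric])
  also have "\<dots> = y [^]\<^bsub>T\<^esub> Suc k" by (simp only: T.nat_pow_Suc2[OF y])
  finally show ?thesis using k by simp
qed

lemma pow_absorb_right: assumes m: "monoid T" and y: "y \<in> carrier T" and e: "e \<in> carrier T"
  and ey: "y \<otimes>\<^bsub>T\<^esub> e = y" and n: "n \<ge> 1"
  shows "y [^]\<^bsub>T\<^esub> (n::nat) \<otimes>\<^bsub>T\<^esub> e = y [^]\<^bsub>T\<^esub> n"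
proof -
  interpret T: monoid T by (rule m)
  obtain k where k: "n = Suc k" using n by (cases n) auto
  have "y [^]\<^bsub>T\<^esub> Suc k \<otimes>\<^bsub>T\<^esub> e = (y [^]\<^bsub>T\<^esub> k \<otimes>\<^bsub>T\<^esub> y) \<otimes>\<^bsub>T\<^esub> e"
    by simp
  also have "\<dots> = y [^]\<^bsub>T\<^esub> k \<otimes>\<^bsub>T\<^esub> y" using ey y e by (simp add: T.m_assoc)
  finally show ?thesis using k by simp
qed

lemma step_props: assumes T: "T \<in> finmon" and e: "idem T e" and x: "x \<in> carrier T"
  shows "idem T (stepT T e x) \<and> lem T (stepT T e x) e"
proof -
  have m: "monoid T" using T finmonD by blast
  interpret T: monoid T by (rule m)
  have ec: "e \<in> carrier T" and ee: "e \<otimes>\<^bsub>T\<^esub> e = e" using e by (auto simp: idem_def)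
  define y where "y = e \<otimes>\<^bsub>T\<^esub> (x \<otimes>\<^bsub>T\<^esub> e)"
  have yc: "y \<in> carrier T" using ec x by (simp add: y_def)
  have ey: "e \<otimes>\<^bsub>T\<^esub> y = y" unfolding y_def using ec x ee by (simp add: T.m_assoc[symmetric])
  have ye: "y \<otimes>\<^bsub>T\<^esub> e = y" unfolding y_def using ec x ee by (simp add: T.m_assoc)
  have N: "(fact (card (carrier T)) :: nat) \<ge> 1" by (rule fact_ge_1)
  have s: "stepT T e x = y [^]\<^bsub>T\<^esub> (fact (card (carrier T)) :: nat)"
    by (simp add: stepT_def pw_def y_def)
  show ?thesis
    unfolding idem_def lem_def
    using pw_closed[OF T yc] pw_idem[OF T yc] pow_absorb_left[OF m yc ec ey N] pow_absorb_right[OF m yc ec ye N]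
    by (simp add: s pw_def[symmetric])
qed

lemma step_closed: "T \<in> finmon \<Longrightarrow> idem T e \<Longrightarrow> x \<in> carrier T \<Longrightarrow> stepT T e x \<in> carrier T"
  using step_props idem_def by blast

lemma round_props: assumes T: "T \<in> finmon" and f: "f \<in> A \<rightarrow>\<^sub>E carrier T"
  shows "set as \<subseteq> A \<Longrightarrow> idem T e \<Longrightarrow> idem T (roundT T f as e) \<and> lem T (roundT T f as e) e"
proof (induction as arbitrary: e)
  case Nil then show ?case by (simp add: roundT_def lem_refl)
next
  case (Cons a as)
  have m: "monoid T" using T finmonD by blast
  have asA: "set as \<subseteq> A" and aA: "a \<in> A" using Cons.prems(1) by auto
  have fa: "f a \<in> carrier T" using f aA by auto
  define e1 where "e1 = stepT T e (f a)"
  have e1: "idem T e1" "lem T e1 e" using step_props[OF T Cons.prems(2) fa] by (auto simp: e1_def)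
  have r: "roundT T f (a # as) e = roundT T f as e1" by (simp add: roundT_def e1_def)
  have IH: "idem T (roundT T f as e1) \<and> lem T (roundT T f as e1) e1" by (rule Cons.IH[OF asA e1(1)])
  have c1: "roundT T f as e1 \<in> carrier T" using IH by (simp add: idem_def)
  have c2: "e1 \<in> carrier T" using e1 by (simp add: idem_def)
  have c3: "e \<in> carrier T" using Cons.prems(2) by (simp add: idem_def)
  have "lem T (roundT T f as e1) e" using lem_trans[OF m c1 c2 c3 conjunct2[OF IH] e1(2)] .
  then show ?case using r IH by simp
qed

lemma round_fix: assumes T: "T \<in> finmon" and f: "f \<in> A \<rightarrow>\<^sub>E carrier T"
  shows "set as \<subseteq> A \<Longrightarrow> idem T e \<Longrightarrow> roundT T f as e = e \<Longrightarrow> \<forall>a\<in>set as. stepT T e (f a) = e"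
proof (induction as arbitrary: e)
  case Nil then show ?case by simp
next
  case (Cons a as)
  have asA: "set as \<subseteq> A" and aA: "a \<in> A" using Cons.prems(1) by auto
  have fa: "f a \<in> carrier T" using f aA by auto
  define e1 where "e1 = stepT T e (f a)"
  have e1: "idem T e1" "lem T e1 e" using step_props[OF T Cons.prems(2) fa] by (auto simp: e1_def)
  have r: "roundT T f as e1 = e" using Cons.prems(3) by (simp add: roundT_def e1_def)
  have "lem T (roundT T f as e1) e1" using round_props[OF T f asA e1(1)] by simp
  then have "lem T e e1" using r by simp
  then have ee1: "e1 = e" using lem_antisym e1(2) by blast
  have r2: "roundT T f as e = e" using r ee1 by simp
  have "\<forall>a\<in>set as. stepT T e (f a) = e" by (rule Cons.IH[OF asA Cons.prems(2) r2])
  then show ?case using ee1 e1_def by simp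
qed

lemma seq_Suc: "seqT T f as (Suc n) = roundT T f as (seqT T f as n)"
  by (simp add: seqT_def)

lemma seq_props: assumes T: "T \<in> finmon" and f: "f \<in> A \<rightarrow>\<^sub>E carrier T" and as: "set as \<subseteq> A"
  shows "idem T (seqT T f as n)"
proof (induction n)
  case 0
  have m: "monoid T" using T finmonD by blast
  then show ?case by (simp add: seqT_def idem_def monoid.one_closed monoid.l_one)
next
  case (Suc n) then show ?case using round_props[OF T f as Suc] by (simp add: seq_Suc)
qed

lemma seq_mono: assumes T: "T \<in> finmon" and f: "f \<in> A \<rightarrow>\<^sub>E carrier T" and as: "set as \<subseteq> A"
  shows "n \<le> m \<Longrightarrow> lem T (seqT T f as m) (seqT T f as n)"
proof (induction m)
  case 0 then show ?case using seq_props[OF T f as] by (simp add: lem_refl)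
next
  case (Suc m)
  have mT: "monoid T" using T finmonD by blast
  show ?case
  proof (cases "n = Suc m")
    case True then show ?thesis using seq_props[OF T f as] by (simp add: lem_refl)
  next
    case False
    then have "n \<le> m" using Suc by simp
    then have 1: "lem T (seqT T f as m) (seqT T f as n)" using Suc by simp
    have 2: "lem T (seqT T f as (Suc m)) (seqT T f as m)"
      using round_props[OF T f as seq_props[OF T f as, of m]] by (simp add: seq_Suc)
    have cc: "seqT T f as k \<in> carrier T" for k using seq_props[OF T f as, of k] by (simp add: idem_def)
    show ?thesis by (rule lem_trans[OF mT cc cc cc 2 1])
  qed
qed

lemma seq_stable_from: assumes "seqT T f as (Suc i) = seqT T f as i"
  shows "m \<ge> i \<Longrightarrow> seqT T f as m = seqT T f as i"
proof (induction m)
  case 0 then show ?case by simp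
next
  case (Suc m)
  show ?case
  proof (cases "Suc m = i")
    case False
    then have "m \<ge> i" using Suc by simp
    then have "seqT T f as m = seqT T f as i" using Suc by simp
    then show ?thesis using assms by (simp add: seq_Suc)
  qed simp
qed

lemma seq_stab: assumes T: "T \<in> finmon" and f: "f \<in> A \<rightarrow>\<^sub>E carrier T" and as: "set as \<subseteq> A"
  shows "\<exists>i < card (carrier T). seqT T f as (Suc i) = seqT T f as i"
proof -
  have fin: "finite (carrier T)" using T finmonD by blast
  have "\<not> inj_on (seqT T f as) {0..card (carrier T)}"
  proof
    assume inj: "inj_on (seqT T f as) {0..card (carrier T)}"
    have "seqT T f as ` {0..card (carrier T)} \<subseteq> carrier T" using seq_props[OF T f as] by (auto simp: idem_def)
    then have "card (seqT T f as ` {0..card (carrier T)}) \<le> card (carrier T)" by (rule card_mono[OF fin])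
    with card_image[OF inj] show False by simp
  qed
  then obtain a b where ab: "a \<le> card (carrier T)" "b \<le> card (carrier T)" "a \<noteq> b" "seqT T f as a = seqT T f as b"
    unfolding inj_on_def by auto
  have "\<exists>i j. i < j \<and> j \<le> card (carrier T) \<and> seqT T f as i = seqT T f as j"
  proof (cases "a < b")
    case True then show ?thesis using ab by blast
  next
    case False then have "b < a" using ab(3) by simp
    then show ?thesis using ab by (intro exI[of _ b] exI[of _ a]) simp
  qed
  then obtain i j where ij: "i < j" "j \<le> card (carrier T)" "seqT T f as i = seqT T f as j"
    by blast
  have 1: "lem T (seqT T f as (Suc i)) (seqT T f as i)" using seq_mono[OF T f as] by simp
  have 2: "lem T (seqT T f as j) (seqT T f as (Suc i))" using seq_mono[OF T f as] ij by simp
  have "seqT T f as (Suc i) = seqT T f as i" using lem_antisym[OF 1] 2 ij(3) by simp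
  then show ?thesis using ij by (intro exI[of _ i]) simp
qed

lemma seq_limit: assumes T: "T \<in> finmon" and f: "f \<in> A \<rightarrow>\<^sub>E carrier T" and as: "set as \<subseteq> A"
  and n: "card (carrier T) \<le> n"
  shows "seqT T f as n = seqT T f as (card (carrier T))"
proof -
  obtain i where i: "i < card (carrier T)" "seqT T f as (Suc i) = seqT T f as i"
    using seq_stab[OF T f as] by blast
  have "seqT T f as n = seqT T f as i" using i(1) n by (intro seq_stable_from[OF i(2)]) simp
  moreover have "seqT T f as (card (carrier T)) = seqT T f as i" using i(1) by (intro seq_stable_from[OF i(2)]) simp
  ultimately show ?thesis by simp
qed

lemma seq_fix: assumes T: "T \<in> finmon" and f: "f \<in> A \<rightarrow>\<^sub>E carrier T" and as: "set as \<subseteq> A"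
  shows "\<forall>a\<in>set as. stepT T (seqT T f as (card (carrier T))) (f a) = seqT T f as (card (carrier T))"
proof -
  obtain i where i: "i < card (carrier T)" "seqT T f as (Suc i) = seqT T f as i"
    using seq_stab[OF T f as] by blast
  have e: "seqT T f as (card (carrier T)) = seqT T f as i" using i(1) by (intro seq_stable_from[OF i(2)]) simp
  have "roundT T f as (seqT T f as i) = seqT T f as i" using i(2) by (simp add: seq_Suc)
  then have "\<forall>a\<in>set as. stepT T (seqT T f as i) (f a) = seqT T f as i"
    by (rule round_fix[OF T f as seq_props[OF T f as]])
  then show ?thesis unfolding e .
qed



definition Estep :: "'a set \<Rightarrow> 'a io \<Rightarrow> 'a \<Rightarrow> 'a io" where
  "Estep A v a = omega A (imult A v (imult A (gen A a) v))"

definition Eround :: "'a set \<Rightarrow> 'a list \<Rightarrow> 'a io \<Rightarrow> 'a io" where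
  "Eround A as v = foldl (Estep A) v as"

definition En :: "'a set \<Rightarrow> 'a list \<Rightarrow> nat \<Rightarrow> 'a io" where
  "En A as n = (Eround A as ^^ n) (ione A)"

definition Eio :: "'a set \<Rightarrow> 'a list \<Rightarrow> 'a io" where
  "Eio A as = (\<lambda>T f. if valid_asg A T f then seqT T f as (card (carrier T)) else undefined)"

lemma Estep_Omega: "v \<in> Omega A \<Longrightarrow> a \<in> A \<Longrightarrow> Estep A v a \<in> Omega A"
  by (simp add: Estep_def omega_Omega imult_Omega gen_Omega)

lemma Estep_val: assumes v: "v \<in> Omega A" and a: "a \<in> A" and vT: "valid_asg A T f"
  shows "Estep A v a T f = stepT T (v T f) (f a)"
proof -
  have "imult A v (imult A (gen A a) v) \<in> Omega A" using v a by (simp add: imult_Omega gen_Omega)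
  then show ?thesis using vT by (simp add: Estep_def omega_val imult_val gen_val stepT_def)
qed

lemma Eround_Omega: "set as \<subseteq> A \<Longrightarrow> v \<in> Omega A \<Longrightarrow> Eround A as v \<in> Omega A"
proof (induction as arbitrary: v)
  case Nil then show ?case by (simp add: Eround_def)
next
  case (Cons a as)
  have "Estep A v a \<in> Omega A" using Cons.prems by (simp add: Estep_Omega)
  then have "Eround A as (Estep A v a) \<in> Omega A" using Cons by simp
  then show ?case by (simp add: Eround_def)
qed

lemma Eround_val: "set as \<subseteq> A \<Longrightarrow> v \<in> Omega A \<Longrightarrow> valid_asg A T f \<Longrightarrow>
   Eround A as v T f = roundT T f as (v T f)"
proof (induction as arbitrary: v)
  case Nil then show ?case by (simp add: Eround_def roundT_def)
next
  case (Cons a as)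
  have aA: "a \<in> A" and asA: "set as \<subseteq> A" using Cons.prems by auto
  have O: "Estep A v a \<in> Omega A" using Cons.prems by (simp add: Estep_Omega)
  have "Eround A (a # as) v T f = Eround A as (Estep A v a) T f" by (simp add: Eround_def)
  also have "\<dots> = roundT T f as (Estep A v a T f)" by (rule Cons.IH[OF asA O Cons.prems(3)])
  also have "Estep A v a T f = stepT T (v T f) (f a)" by (rule Estep_val[OF Cons.prems(2) aA Cons.prems(3)])
  finally show ?case by (simp add: roundT_def)
qed

lemma En_Omega: "set as \<subseteq> A \<Longrightarrow> En A as n \<in> Omega A"
  by (induction n) (simp_all add: En_def ione_Omega Eround_Omega)

lemma En_Suc: "En A as (Suc n) = Eround A as (En A as n)"
  by (simp add: En_def)

lemma En_val: assumes as: "set as \<subseteq> A" and vT: "valid_asg A T f"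
  shows "En A as n T f = seqT T f as n"
proof (induction n)
  case 0 then show ?case using vT by (simp add: En_def seqT_def ione_val)
next
  case (Suc n)
  have "En A as (Suc n) T f = roundT T f as (En A as n T f)"
    unfolding En_Suc by (rule Eround_val[OF as En_Omega[OF as] vT])
  then show ?case using Suc by (simp add: seq_Suc)
qed

lemma En_th: assumes as: "set as \<subseteq> A" shows "(En A as n, ione A) \<in> th A"
proof (cases n)
  case 0 then show ?thesis by (simp add: En_def th_refl ione_Omega)
next
  case (Suc m)
  show ?thesis
  proof (cases "as = []")
    case True
    then have "En A as n = ione A" by (induction n) (simp_all add: En_def Eround_def)
    then show ?thesis by (simp add: th_refl ione_Omega)
  next
    case False
    then obtain bs b where asb: "as = bs @ [b]" by (metis rev_exhaust)
    have bA: "b \<in> A" and bsA: "set bs \<subseteq> A" using as asb by auto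
    define w where "w = foldl (Estep A) (En A as m) bs"
    have wO: "w \<in> Omega A"
      using Eround_Omega[OF bsA En_Omega[OF as]] by (simp add: w_def Eround_def)
    have "En A as n = Estep A w b" using Suc asb by (simp add: En_Suc Eround_def w_def)
    also have "\<dots> = omega A (imult A w (imult A (gen A b) w))" by (simp add: Estep_def)
    finally have eq: "En A as n = omega A (imult A w (imult A (gen A b) w))" .
    have "imult A w (imult A (gen A b) w) \<in> Omega A" using wO bA by (simp add: imult_Omega gen_Omega)
    from th_omega[OF this] show ?thesis unfolding eq .
  qed
qed

lemma seqT_hom: assumes as: "set as \<subseteq> A" and S: "S \<in> finmon" and T: "T \<in> finmon" and h: "h \<in> mhom S T"
  and f: "f \<in> A \<rightarrow>\<^sub>E carrier S"
  shows "seqT T (restrict (h \<circ> f) A) as n = h (seqT S f as n)"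
proof -
  have vS: "valid_asg A S f" using S f by (simp add: valid_asg_def)
  have vT: "valid_asg A T (restrict (h \<circ> f) A)" by (rule valid_restrict[OF T h f])
  show ?thesis using OmegaD3[OF En_Omega[OF as] S T h f] En_val[OF as vS] En_val[OF as vT] by simp
qed

lemma Eio_Omega: assumes as: "set as \<subseteq> A" shows "Eio A as \<in> Omega A"
proof (rule OmegaI)
  fix T f assume vT: "valid_asg A T f"
  have "T \<in> finmon" "f \<in> A \<rightarrow>\<^sub>E carrier T" using vT by (auto simp: valid_asg_def)
  then show "Eio A as T f \<in> carrier T" using vT seq_props[of T f A as] as by (simp add: Eio_def idem_def)
next
  fix S T h f assume S: "S \<in> finmon" and T: "T \<in> finmon" and h: "h \<in> mhom S T" and f: "f \<in> A \<rightarrow>\<^sub>E carrier S"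
  define g where "g = restrict (h \<circ> f) A"
  have vS: "valid_asg A S f" using S f by (simp add: valid_asg_def)
  have vT: "valid_asg A T g" unfolding g_def by (rule valid_restrict[OF T h f])
  have gT: "g \<in> A \<rightarrow>\<^sub>E carrier T" using vT by (simp add: valid_asg_def)
  have hom: "seqT T g as n = h (seqT S f as n)" for n unfolding g_def by (rule seqT_hom[OF as S T h f])
  obtain i where i: "i < card (carrier S)" "seqT S f as (Suc i) = seqT S f as i"
    using seq_stab[OF S f as] by blast
  have iT: "seqT T g as (Suc i) = seqT T g as i" using hom i(2) by simp
  obtain j where j: "j < card (carrier T)" "seqT T g as (Suc j) = seqT T g as j"
    using seq_stab[OF T gT as] by blast
  have e1: "seqT T g as (card (carrier S)) = seqT T g as i" using i(1) by (intro seq_stable_from[OF iT]) simp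
  have e2: "seqT T g as (card (carrier T)) = seqT T g as j" using j(1) by (intro seq_stable_from[OF j(2)]) simp
  have e3: "seqT T g as i = seqT T g as j"
  proof (cases "i \<le> j")
    case True then show ?thesis by (intro seq_stable_from[OF iT, symmetric]) simp
  next
    case False then show ?thesis by (intro seq_stable_from[OF j(2)]) simp
  qed
  have "Eio A as T g = seqT T g as (card (carrier T))" using vT by (simp add: Eio_def)
  also have "\<dots> = seqT T g as (card (carrier S))" using e1 e2 e3 by simp
  also have "\<dots> = h (seqT S f as (card (carrier S)))" by (rule hom)
  also have "\<dots> = h (Eio A as S f)" using vS by (simp add: Eio_def)
  finally show "Eio A as T (restrict (h \<circ> f) A) = h (Eio A as S f)" by (simp add: g_def)
qed (simp add: Eio_def)

lemma Eio_th: assumes as: "set as \<subseteq> A" shows "(Eio A as, ione A) \<in> th A"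
proof (rule th_closed)
  have "\<exists>(s', t')\<in>th A. agree_on Ts s' (Eio A as) \<and> agree_on Ts t' (ione A)" if Ts: "Ts \<in> fin_tests" for Ts
  proof -
    have finTs: "finite Ts" and subTs: "Ts \<subseteq> finmon" using Ts by (auto simp: fin_tests_def)
    define n where "n = (\<Sum>T\<in>Ts. card (carrier T))"
    have "agree_on Ts (En A as n) (Eio A as)"
      unfolding agree_on_def
    proof (intro ballI ext)
      fix T f assume T: "T \<in> Ts"
      have c: "card (carrier T) \<le> n" unfolding n_def using member_le_sum[of T Ts "\<lambda>T. card (carrier T)"] T finTs by simp
      show "En A as n T f = Eio A as T f"
      proof (cases "valid_asg A T f")
        case True
        then have "T \<in> finmon" "f \<in> A \<rightarrow>\<^sub>E carrier T" by (auto simp: valid_asg_def)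
        then show ?thesis using True En_val[OF as True] seq_limit[OF _ _ as c] by (simp add: Eio_def)
      next
        case False
        then show ?thesis using OmegaD1[OF En_Omega[OF as] False] by (simp add: Eio_def)
      qed
    qed
    then show ?thesis using En_th[OF as, of n] agree_on_refl[of Ts "ione A"] by blast
  qed
  then show "(Eio A as, ione A) \<in> tclosure A (th A)"
    unfolding tclosure_def using Eio_Omega[OF as] ione_Omega by blast
qed

lemma Eio_fix: assumes as: "set as = A" and vT: "valid_asg A T f"
  shows "idem T (Eio A as T f) \<and> (\<forall>a\<in>A. stepT T (Eio A as T f) (f a) = Eio A as T f)"
proof -
  have T: "T \<in> finmon" and f: "f \<in> A \<rightarrow>\<^sub>E carrier T" using vT by (auto simp: valid_asg_def)
  have asA: "set as \<subseteq> A" using as by simp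
  show ?thesis using vT seq_props[OF T f asA] seq_fix[OF T f asA] as by (simp add: Eio_def)
qed



lemma group_part:
  assumes T: "T \<in> finmon" and f: "f \<in> A \<rightarrow>\<^sub>E carrier T" and ec: "e \<in> carrier T"
    and ee: "e \<otimes>\<^bsub>T\<^esub> e = e" and fx: "\<forall>a\<in>A. pw T (e \<otimes>\<^bsub>T\<^esub> (f a \<otimes>\<^bsub>T\<^esub> e)) = e"
    and s: "s \<in> Omega A" and t: "t \<in> Omega A"
    and val: "\<forall>H\<in>models {eps_omega}. holds_in H (A, s, t)"
  shows "e \<otimes>\<^bsub>T\<^esub> s T (\<lambda>a\<in>A. e \<otimes>\<^bsub>T\<^esub> (f a \<otimes>\<^bsub>T\<^esub> e)) = e \<otimes>\<^bsub>T\<^esub> t T (\<lambda>a\<in>A. e \<otimes>\<^bsub>T\<^esub> (f a \<otimes>\<^bsub>T\<^esub> e))"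
proof -
  have m: "monoid T" and fin: "finite (carrier T)" using T finmonD by blast+
  interpret T: monoid T by (rule m)
  define g where "g = (\<lambda>a\<in>A. e \<otimes>\<^bsub>T\<^esub> (f a \<otimes>\<^bsub>T\<^esub> e))"
  define Hc where "Hc = {y \<in> carrier T. e \<otimes>\<^bsub>T\<^esub> y = y \<and> y \<otimes>\<^bsub>T\<^esub> e = y \<and>
      (\<exists>z\<in>carrier T. e \<otimes>\<^bsub>T\<^esub> z = z \<and> z \<otimes>\<^bsub>T\<^esub> e = z \<and> y \<otimes>\<^bsub>T\<^esub> z = e \<and> z \<otimes>\<^bsub>T\<^esub> y = e)}"
  have Hc_sub: "Hc \<subseteq> carrier T" by (auto simp: Hc_def)
  have eHc: "e \<in> Hc" using ec ee unfolding Hc_def by blast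
  have Hc_left: "e \<otimes>\<^bsub>T\<^esub> y = y" if "y \<in> Hc" for y using that by (simp add: Hc_def)
  have Hc_right: "y \<otimes>\<^bsub>T\<^esub> e = y" if "y \<in> Hc" for y using that by (simp add: Hc_def)
  have Hc_mult: "x \<otimes>\<^bsub>T\<^esub> y \<in> Hc" if x: "x \<in> Hc" and y: "y \<in> Hc" for x y
  proof -
    obtain z1 where z1: "z1 \<in> carrier T" "e \<otimes>\<^bsub>T\<^esub> z1 = z1" "z1 \<otimes>\<^bsub>T\<^esub> e = z1" "x \<otimes>\<^bsub>T\<^esub> z1 = e" "z1 \<otimes>\<^bsub>T\<^esub> x = e"
      using x by (auto simp: Hc_def)
    obtain z2 where z2: "z2 \<in> carrier T" "e \<otimes>\<^bsub>T\<^esub> z2 = z2" "z2 \<otimes>\<^bsub>T\<^esub> e = z2" "y \<otimes>\<^bsub>T\<^esub> z2 = e" "z2 \<otimes>\<^bsub>T\<^esub> y = e"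
      using y by (auto simp: Hc_def)
    have xc: "x \<in> carrier T" and yc: "y \<in> carrier T" using x y Hc_sub by auto
    have 1: "e \<otimes>\<^bsub>T\<^esub> (x \<otimes>\<^bsub>T\<^esub> y) = x \<otimes>\<^bsub>T\<^esub> y"
      using Hc_left[OF x] xc yc ec by (simp add: T.m_assoc[symmetric])
    have 2: "(x \<otimes>\<^bsub>T\<^esub> y) \<otimes>\<^bsub>T\<^esub> e = x \<otimes>\<^bsub>T\<^esub> y"
      using Hc_right[OF y] xc yc ec by (simp add: T.m_assoc)
    have 3: "e \<otimes>\<^bsub>T\<^esub> (z2 \<otimes>\<^bsub>T\<^esub> z1) = z2 \<otimes>\<^bsub>T\<^esub> z1"
      using z1 z2 ec by (simp add: T.m_assoc[symmetric])
    have 4: "(z2 \<otimes>\<^bsub>T\<^esub> z1) \<otimes>\<^bsub>T\<^esub> e = z2 \<otimes>\<^bsub>T\<^esub> z1"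
      using z1 z2 ec by (simp add: T.m_assoc)
    have "(x \<otimes>\<^bsub>T\<^esub> y) \<otimes>\<^bsub>T\<^esub> (z2 \<otimes>\<^bsub>T\<^esub> z1) = x \<otimes>\<^bsub>T\<^esub> ((y \<otimes>\<^bsub>T\<^esub> z2) \<otimes>\<^bsub>T\<^esub> z1)"
      using xc yc z1(1) z2(1) by (simp add: T.m_assoc)
    also have "\<dots> = (x \<otimes>\<^bsub>T\<^esub> e) \<otimes>\<^bsub>T\<^esub> z1" using xc z1(1) z2(4) ec by (simp add: T.m_assoc)
    also have "\<dots> = e" using Hc_right[OF x] z1 by simp
    finally have 5: "(x \<otimes>\<^bsub>T\<^esub> y) \<otimes>\<^bsub>T\<^esub> (z2 \<otimes>\<^bsub>T\<^esub> z1) = e" .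
    have "(z2 \<otimes>\<^bsub>T\<^esub> z1) \<otimes>\<^bsub>T\<^esub> (x \<otimes>\<^bsub>T\<^esub> y) = z2 \<otimes>\<^bsub>T\<^esub> ((z1 \<otimes>\<^bsub>T\<^esub> x) \<otimes>\<^bsub>T\<^esub> y)"
      using xc yc z1(1) z2(1) by (simp add: T.m_assoc)
    also have "\<dots> = (z2 \<otimes>\<^bsub>T\<^esub> e) \<otimes>\<^bsub>T\<^esub> y" using yc z1(5) z2(1) ec by (simp add: T.m_assoc)
    also have "\<dots> = e" using z2 by simp
    finally have 6: "(z2 \<otimes>\<^bsub>T\<^esub> z1) \<otimes>\<^bsub>T\<^esub> (x \<otimes>\<^bsub>T\<^esub> y) = e" .
    have zc: "z2 \<otimes>\<^bsub>T\<^esub> z1 \<in> carrier T" using z1 z2 by simp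
    show ?thesis unfolding Hc_def using xc yc 1 2 3 4 5 6 zc by blast
  qed
  have Hc_inv: "\<exists>z\<in>Hc. y \<otimes>\<^bsub>T\<^esub> z = e \<and> z \<otimes>\<^bsub>T\<^esub> y = e" if y: "y \<in> Hc" for y
  proof -
    obtain z where z: "z \<in> carrier T" "e \<otimes>\<^bsub>T\<^esub> z = z" "z \<otimes>\<^bsub>T\<^esub> e = z" "y \<otimes>\<^bsub>T\<^esub> z = e" "z \<otimes>\<^bsub>T\<^esub> y = e"
      using y by (auto simp: Hc_def)
    have "z \<in> Hc" unfolding Hc_def using z y Hc_sub Hc_left[OF y] Hc_right[OF y] by blast
    then show ?thesis using z by blast
  qed
  have g_Hc: "g a \<in> Hc" if a: "a \<in> A" for a
  proof -
    have fa: "f a \<in> carrier T" using f a by auto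
    define y where "y = e \<otimes>\<^bsub>T\<^esub> (f a \<otimes>\<^bsub>T\<^esub> e)"
    have yc: "y \<in> carrier T" using fa ec by (simp add: y_def)
    have ey: "e \<otimes>\<^bsub>T\<^esub> y = y" unfolding y_def using ec fa ee by (simp add: T.m_assoc[symmetric])
    have ye: "y \<otimes>\<^bsub>T\<^esub> e = y" unfolding y_def using ec fa ee by (simp add: T.m_assoc)
    define N :: nat where "N = fact (card (carrier T))"
    have N1: "N \<ge> 1" unfolding N_def by (rule fact_ge_1)
    have yN: "y [^]\<^bsub>T\<^esub> N = e" using fx a by (simp add: y_def N_def pw_def)
    define z where "z = e \<otimes>\<^bsub>T\<^esub> (y [^]\<^bsub>T\<^esub> (N - 1) \<otimes>\<^bsub>T\<^esub> e)"
    have p1: "y \<otimes>\<^bsub>T\<^esub> y [^]\<^bsub>T\<^esub> (N - 1) = e"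
      using T.nat_pow_Suc2[OF yc, of "N - 1"] N1 yN by simp
    have p2: "y [^]\<^bsub>T\<^esub> (N - 1) \<otimes>\<^bsub>T\<^esub> y = e"
      using T.nat_pow_Suc[of y "N - 1"] N1 yN by simp
    have pc: "y [^]\<^bsub>T\<^esub> (N - 1) \<in> carrier T" using yc by simp
    have zc: "z \<in> carrier T" using pc ec by (simp add: z_def)
    have ez: "e \<otimes>\<^bsub>T\<^esub> z = z" unfolding z_def using pc ec ee by (simp add: T.m_assoc[symmetric])
    have ze: "z \<otimes>\<^bsub>T\<^esub> e = z" unfolding z_def using pc ec ee by (simp add: T.m_assoc)
    have "y \<otimes>\<^bsub>T\<^esub> z = ((y \<otimes>\<^bsub>T\<^esub> e) \<otimes>\<^bsub>T\<^esub> y [^]\<^bsub>T\<^esub> (N - 1)) \<otimes>\<^bsub>T\<^esub> e"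
      unfolding z_def using yc pc ec by (simp add: T.m_assoc)
    also have "\<dots> = e" using ye p1 ee by simp
    finally have yz: "y \<otimes>\<^bsub>T\<^esub> z = e" .
    have "z \<otimes>\<^bsub>T\<^esub> y = e \<otimes>\<^bsub>T\<^esub> (y [^]\<^bsub>T\<^esub> (N - 1) \<otimes>\<^bsub>T\<^esub> (e \<otimes>\<^bsub>T\<^esub> y))"
      unfolding z_def using yc pc ec by (simp add: T.m_assoc)
    also have "\<dots> = e" using ey p2 ee by simp
    finally have zy: "z \<otimes>\<^bsub>T\<^esub> y = e" .
    have "y \<in> Hc" unfolding Hc_def using yc ey ye zc ez ze yz zy by blast
    then show ?thesis using a by (simp add: g_def y_def)
  qed
  define H :: "nat monoid" where "H = \<lparr>carrier = Hc, mult = mult T, one = e\<rparr>"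
  have mH: "monoid H"
  proof (rule monoidI)
    fix x y assume "x \<in> carrier H" "y \<in> carrier H" then show "x \<otimes>\<^bsub>H\<^esub> y \<in> carrier H"
      using Hc_mult by (simp add: H_def)
  next
    show "\<one>\<^bsub>H\<^esub> \<in> carrier H" using eHc by (simp add: H_def)
  next
    fix x y z assume "x \<in> carrier H" "y \<in> carrier H" "z \<in> carrier H"
    then have "x \<in> carrier T" "y \<in> carrier T" "z \<in> carrier T" using Hc_sub by (auto simp: H_def)
    then show "x \<otimes>\<^bsub>H\<^esub> y \<otimes>\<^bsub>H\<^esub> z = x \<otimes>\<^bsub>H\<^esub> (y \<otimes>\<^bsub>H\<^esub> z)"
      by (simp add: H_def T.m_assoc)
  next
    fix x assume "x \<in> carrier H"
    then show "\<one>\<^bsub>H\<^esub> \<otimes>\<^bsub>H\<^esub> x = x" "x \<otimes>\<^bsub>H\<^esub> \<one>\<^bsub>H\<^esub> = x"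
      using Hc_left Hc_right by (auto simp: H_def)
  qed
  have finHc: "finite Hc" using finite_subset[OF Hc_sub fin] .
  have HF: "H \<in> finmon" using mH finHc by (simp add: finmon_def H_def)
  have Hmod: "H \<in> models {eps_omega}"
  proof (rule group_models[OF HF])
    show "\<forall>y\<in>carrier H. \<exists>z\<in>carrier H. y \<otimes>\<^bsub>H\<^esub> z = \<one>\<^bsub>H\<^esub> \<and> z \<otimes>\<^bsub>H\<^esub> y = \<one>\<^bsub>H\<^esub>"
      using Hc_inv by (simp add: H_def)
  qed
  define T2 :: "nat monoid" where "T2 = \<lparr>carrier = insert \<one>\<^bsub>T\<^esub> Hc, mult = mult T, one = \<one>\<^bsub>T\<^esub>\<rparr>"
  have T2c: "insert \<one>\<^bsub>T\<^esub> Hc \<subseteq> carrier T" using Hc_sub by auto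
  have mT2: "monoid T2"
  proof (rule monoidI)
    fix x y assume x: "x \<in> carrier T2" and y: "y \<in> carrier T2"
    show "x \<otimes>\<^bsub>T2\<^esub> y \<in> carrier T2"
    proof (cases "x = \<one>\<^bsub>T\<^esub>")
      case True then show ?thesis using y T2c by (auto simp: T2_def)
    next
      case False
      then have xH: "x \<in> Hc" using x by (simp add: T2_def)
      show ?thesis
      proof (cases "y = \<one>\<^bsub>T\<^esub>")
        case True then show ?thesis using xH Hc_sub by (auto simp: T2_def)
      next
        case False then have "y \<in> Hc" using y by (simp add: T2_def)
        then show ?thesis using xH Hc_mult by (simp add: T2_def)
      qed
    qed
  next
    show "\<one>\<^bsub>T2\<^esub> \<in> carrier T2" by (simp add: T2_def)
  next
    fix x y z assume "x \<in> carrier T2" "y \<in> carrier T2" "z \<in> carrier T2"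
    then have "x \<in> carrier T" "y \<in> carrier T" "z \<in> carrier T" using T2c by (auto simp: T2_def)
    then show "x \<otimes>\<^bsub>T2\<^esub> y \<otimes>\<^bsub>T2\<^esub> z = x \<otimes>\<^bsub>T2\<^esub> (y \<otimes>\<^bsub>T2\<^esub> z)"
      by (simp add: T2_def T.m_assoc)
  next
    fix x assume "x \<in> carrier T2"
    then show "\<one>\<^bsub>T2\<^esub> \<otimes>\<^bsub>T2\<^esub> x = x" "x \<otimes>\<^bsub>T2\<^esub> \<one>\<^bsub>T2\<^esub> = x"
      using T2c by (auto simp: T2_def)
  qed
  have T2F: "T2 \<in> finmon" using mT2 finite_subset[OF T2c fin] by (simp add: finmon_def T2_def)
  have idhom: "(\<lambda>x. x) \<in> mhom T2 T" using T2c by (auto simp: mhom_def T2_def)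
  define \<rho> where "\<rho> x = (if x = \<one>\<^bsub>T\<^esub> then e else x)" for x
  have e1: "e = \<one>\<^bsub>T\<^esub>" if "\<one>\<^bsub>T\<^esub> \<in> Hc" using Hc_left[OF that] ec by simp
  have rho_Hc: "\<rho> x \<in> Hc" if "x \<in> carrier T2" for x
    using that eHc by (auto simp: \<rho>_def T2_def)
  have rho_e: "e \<otimes>\<^bsub>T\<^esub> x = \<rho> x" if x: "x \<in> carrier T2" for x
  proof (cases "x = \<one>\<^bsub>T\<^esub>")
    case True then show ?thesis using ec by (simp add: \<rho>_def)
  next
    case False then have "x \<in> Hc" using x by (simp add: T2_def)
    then show ?thesis using False Hc_left by (simp add: \<rho>_def)
  qed
  have rhohom: "\<rho> \<in> mhom T2 H"
    unfolding mhom_def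
  proof (intro CollectI conjI ballI Pi_I)
    fix x assume "x \<in> carrier T2" then show "\<rho> x \<in> carrier H" using rho_Hc by (simp add: H_def)
  next
    show "\<rho> \<one>\<^bsub>T2\<^esub> = \<one>\<^bsub>H\<^esub>" by (simp add: \<rho>_def T2_def H_def)
  next
    fix x y assume x: "x \<in> carrier T2" and y: "y \<in> carrier T2"
    have xc: "x \<in> carrier T" and yc: "y \<in> carrier T" using x y T2c by (auto simp: T2_def)
    have xy: "x \<otimes>\<^bsub>T\<^esub> y \<in> carrier T2" using mT2 x y monoid.m_closed[of T2 x y] by (simp add: T2_def)
    have "\<rho> (x \<otimes>\<^bsub>T\<^esub> y) = e \<otimes>\<^bsub>T\<^esub> (x \<otimes>\<^bsub>T\<^esub> y)" using rho_e[OF xy] by simp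
    also have "\<dots> = (e \<otimes>\<^bsub>T\<^esub> x) \<otimes>\<^bsub>T\<^esub> y" using xc yc ec by (simp add: T.m_assoc)
    also have "\<dots> = ((e \<otimes>\<^bsub>T\<^esub> x) \<otimes>\<^bsub>T\<^esub> e) \<otimes>\<^bsub>T\<^esub> y"
    proof -
      have "\<rho> x \<otimes>\<^bsub>T\<^esub> e = \<rho> x" using Hc_right[OF rho_Hc[OF x]] .
      then show ?thesis using rho_e[OF x] by simp
    qed
    also have "\<dots> = (e \<otimes>\<^bsub>T\<^esub> x) \<otimes>\<^bsub>T\<^esub> (e \<otimes>\<^bsub>T\<^esub> y)" using xc yc ec by (simp add: T.m_assoc)
    also have "\<dots> = \<rho> x \<otimes>\<^bsub>T\<^esub> \<rho> y" using rho_e[OF x] rho_e[OF y] by simp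
    finally show "\<rho> (x \<otimes>\<^bsub>T2\<^esub> y) = \<rho> x \<otimes>\<^bsub>H\<^esub> \<rho> y" by (simp add: T2_def H_def)
  qed
  have gT2: "g \<in> A \<rightarrow>\<^sub>E carrier T2" using g_Hc by (auto simp: g_def T2_def)
  have gH: "g \<in> A \<rightarrow>\<^sub>E carrier H" using g_Hc by (auto simp: g_def H_def)
  have rg: "restrict (\<rho> \<circ> g) A = g"
  proof (intro ext)
    fix a show "restrict (\<rho> \<circ> g) A a = g a"
    proof (cases "a \<in> A")
      case True
      have "\<rho> (g a) = g a"
      proof (cases "g a = \<one>\<^bsub>T\<^esub>")
        case True2: True
        then have "\<one>\<^bsub>T\<^esub> \<in> Hc" using g_Hc[OF True] by simp
        then show ?thesis using True2 e1 by (simp add: \<rho>_def)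
      qed (simp add: \<rho>_def)
      then show ?thesis using True by simp
    next
      case False then show ?thesis by (simp add: g_def)
    qed
  qed
  have ig: "restrict ((\<lambda>x. x) \<circ> g) A = g" by (auto simp: g_def)
  have key: "e \<otimes>\<^bsub>T\<^esub> u T g = u H g" if u: "u \<in> Omega A" for u
  proof -
    have vT2: "valid_asg A T2 g" using T2F gT2 by (simp add: valid_asg_def)
    have "u T g = u T2 g" using OmegaD3[OF u T2F T idhom gT2] ig by simp
    moreover have "\<rho> (u T2 g) = u H g" using OmegaD3[OF u T2F HF rhohom gT2] rg by simp
    moreover have "e \<otimes>\<^bsub>T\<^esub> u T2 g = \<rho> (u T2 g)" by (rule rho_e[OF OmegaD2[OF u vT2]])
    ultimately show ?thesis by simp
  qed
  have "holds_in H (A, s, t)" using val Hmod by blast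
  then have "\<forall>\<psi>. cont_hom_fin A H \<psi> \<longrightarrow> \<psi> s = \<psi> t" unfolding holds_in_def by simp
  then have "(\<lambda>u. u H g) s = (\<lambda>u. u H g) t" using eval_cont_hom_fin[OF HF gH] by blast
  then have "s H g = t H g" by simp
  then show ?thesis using key[OF s] key[OF t] by (simp add: g_def)
qed



definition gE :: "'a set \<Rightarrow> 'a io \<Rightarrow> nat monoid \<Rightarrow> ('a \<Rightarrow> nat) \<Rightarrow> 'a \<Rightarrow> nat" where
  "gE A E T f = (\<lambda>a\<in>A. E T f \<otimes>\<^bsub>T\<^esub> (f a \<otimes>\<^bsub>T\<^esub> E T f))"

definition sub :: "'a set \<Rightarrow> 'a io \<Rightarrow> 'a io \<Rightarrow> 'a io" where
  "sub A E u = (\<lambda>T f. if valid_asg A T f then u T (gE A E T f) else undefined)"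

lemma gE_valid: assumes E: "E \<in> Omega A" and vT: "valid_asg A T f" shows "valid_asg A T (gE A E T f)"
proof -
  have T: "T \<in> finmon" and m: "monoid T" and f: "f \<in> A \<rightarrow>\<^sub>E carrier T" using validD[OF vT] by auto
  have ec: "E T f \<in> carrier T" by (rule OmegaD2[OF E vT])
  have "gE A E T f \<in> A \<rightarrow>\<^sub>E carrier T"
    unfolding gE_def using f ec m by (auto intro!: monoid.m_closed)
  then show ?thesis using T by (simp add: valid_asg_def)
qed

lemma sub_Omega: assumes E: "E \<in> Omega A" and u: "u \<in> Omega A" shows "sub A E u \<in> Omega A"
proof (rule OmegaI)
  fix T f assume vT: "valid_asg A T f"
  show "sub A E u T f \<in> carrier T" using vT OmegaD2[OF u gE_valid[OF E vT]] by (simp add: sub_def)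
next
  fix S T h f assume S: "S \<in> finmon" and T: "T \<in> finmon" and h: "h \<in> mhom S T" and f: "f \<in> A \<rightarrow>\<^sub>E carrier S"
  have vS: "valid_asg A S f" using S f by (simp add: valid_asg_def)
  have vT: "valid_asg A T (restrict (h \<circ> f) A)" by (rule valid_restrict[OF T h f])
  have mS: "monoid S" using S finmonD by blast
  have ec: "E S f \<in> carrier S" by (rule OmegaD2[OF E vS])
  have Eh: "E T (restrict (h \<circ> f) A) = h (E S f)" by (rule OmegaD3[OF E S T h f])
  have g1: "gE A E S f \<in> A \<rightarrow>\<^sub>E carrier S" using gE_valid[OF E vS] by (simp add: valid_asg_def)
  have g2: "gE A E T (restrict (h \<circ> f) A) = restrict (h \<circ> gE A E S f) A"
  proof (intro ext)
    fix a show "gE A E T (restrict (h \<circ> f) A) a = restrict (h \<circ> gE A E S f) A a"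
    proof (cases "a \<in> A")
      case True
      have fa: "f a \<in> carrier S" using f True by auto
      have "h (E S f \<otimes>\<^bsub>S\<^esub> (f a \<otimes>\<^bsub>S\<^esub> E S f)) = h (E S f) \<otimes>\<^bsub>T\<^esub> (h (f a) \<otimes>\<^bsub>T\<^esub> h (E S f))"
        using mhom_mult[OF h ec monoid.m_closed[OF mS fa ec]] mhom_mult[OF h fa ec] by simp
      then show ?thesis using True Eh by (simp add: gE_def)
    next
      case False then show ?thesis by (simp add: gE_def)
    qed
  qed
  show "sub A E u T (restrict (h \<circ> f) A) = h (sub A E u S f)"
    using vT vS OmegaD3[OF u S T h g1] g2 by (simp add: sub_def)
qed (simp add: sub_def)

lemma sub_imult: assumes E: "E \<in> Omega A" and u: "u \<in> Omega A" and v: "v \<in> Omega A"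
  shows "sub A E (imult A u v) = imult A (sub A E u) (sub A E v)"
proof (intro ext)
  fix T f show "sub A E (imult A u v) T f = imult A (sub A E u) (sub A E v) T f"
  proof (cases "valid_asg A T f")
    case True then show ?thesis using gE_valid[OF E True] by (simp add: sub_def imult_def)
  qed (simp add: sub_def imult_def)
qed

lemma sub_ione: assumes E: "E \<in> Omega A" shows "sub A E (ione A) = ione A"
proof (intro ext)
  fix T f show "sub A E (ione A) T f = ione A T f"
  proof (cases "valid_asg A T f")
    case True then show ?thesis using gE_valid[OF E True] by (simp add: sub_def ione_def)
  qed (simp add: sub_def ione_def)
qed

lemma sub_gen: assumes E: "E \<in> Omega A" and a: "a \<in> A"
  shows "sub A E (gen A a) = imult A E (imult A (gen A a) E)"
proof (intro ext)
  fix T f show "sub A E (gen A a) T f = imult A E (imult A (gen A a) E) T f"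
  proof (cases "valid_asg A T f")
    case True then show ?thesis using gE_valid[OF E True] a by (simp add: sub_def imult_def gen_def gE_def)
  qed (simp add: sub_def imult_def)
qed

lemma sub_agree: assumes "agree_on Ts u v" shows "agree_on Ts (sub A E u) (sub A E v)"
  unfolding agree_on_def
proof (intro ballI ext)
  fix T f assume T: "T \<in> Ts"
  then have "u T = v T" using assms by (simp add: agree_on_def)
  then show "sub A E u T f = sub A E v T f" by (simp add: sub_def)
qed

lemma sub_wd_th: assumes E: "E \<in> Omega A" and Eth: "(E, ione A) \<in> th A"
  shows "set xs \<subseteq> A \<Longrightarrow> (sub A E (wd A xs), wd A xs) \<in> th A"
proof (induction xs)
  case Nil
  have "wd A [] = ione A" by (simp add: wd_def)
  then show ?case using sub_ione[OF E] th_refl[OF ione_Omega] by simp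
next
  case (Cons a xs)
  have aA: "a \<in> A" and xsA: "set xs \<subseteq> A" using Cons.prems by auto
  have gO: "gen A a \<in> Omega A" by (rule gen_Omega[OF aA])
  have wO: "wd A xs \<in> Omega A" by (rule wd_Omega[OF xsA])
  have eq: "wd A (a # xs) = imult A (gen A a) (wd A xs)" by (simp add: wd_def)
  have "(imult A (gen A a) E, imult A (gen A a) (ione A)) \<in> th A"
    by (rule th_mult[OF th_refl[OF gO] Eth])
  then have 1: "(imult A (gen A a) E, gen A a) \<in> th A" using gO by (simp add: imult_one_right)
  have "(imult A E (imult A (gen A a) E), imult A (ione A) (gen A a)) \<in> th A"
    by (rule th_mult[OF Eth 1])
  then have 2: "(sub A E (gen A a), gen A a) \<in> th A" using gO sub_gen[OF E aA] by (simp add: imult_one_left)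
  have 3: "(sub A E (wd A xs), wd A xs) \<in> th A" by (rule Cons.IH[OF xsA])
  have "(imult A (sub A E (gen A a)) (sub A E (wd A xs)), imult A (gen A a) (wd A xs)) \<in> th A"
    by (rule th_mult[OF 2 3])
  then show ?case unfolding eq sub_imult[OF E gO wO] .
qed

lemma sub_th: assumes A: "finite A" and E: "E \<in> Omega A" and Eth: "(E, ione A) \<in> th A" and u: "u \<in> Omega A"
  shows "(sub A E u, u) \<in> th A"
proof (rule th_closed)
  have "\<exists>(s', t')\<in>th A. agree_on Ts s' (sub A E u) \<and> agree_on Ts t' u" if Ts: "Ts \<in> fin_tests" for Ts
  proof -
    obtain xs where xs: "set xs \<subseteq> A" "agree_on Ts (wd A xs) u" using density[OF A u Ts] by blast
    have "(sub A E (wd A xs), wd A xs) \<in> th A" by (rule sub_wd_th[OF E Eth xs(1)])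
    moreover have "agree_on Ts (sub A E (wd A xs)) (sub A E u)" by (rule sub_agree[OF xs(2)])
    ultimately show ?thesis using xs(2) by blast
  qed
  then show "(sub A E u, u) \<in> tclosure A (th A)"
    unfolding tclosure_def using sub_Omega[OF E u] u by blast
qed

theorem theorem8p3:
  shows "h_strong eps_omega (TYPE('a))"
  unfolding h_strong_def
proof (intro allI impI, elim conjE)
  fix A :: "'a set" and s t
  assume A: "finite A" and s: "s \<in> Omega A" and t: "t \<in> Omega A"
    and val: "\<forall>T\<in>models {eps_omega}. holds_in T (A, s, t)"
  obtain as where as: "set as = A" using finite_list[OF A] by blast
  define E where "E = Eio A as"
  have EO: "E \<in> Omega A" unfolding E_def by (rule Eio_Omega) (simp add: as)
  have Eth: "(E, ione A) \<in> th A" unfolding E_def by (rule Eio_th) (simp add: as)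
  define zeta where "zeta u = imult A E (sub A E u)" for u
  have zth: "(zeta u, u) \<in> th A" if u: "u \<in> Omega A" for u
  proof -
    have sO: "sub A E u \<in> Omega A" by (rule sub_Omega[OF EO u])
    have "(imult A E (sub A E u), imult A (ione A) (sub A E u)) \<in> th A"
      by (rule th_mult[OF Eth th_refl[OF sO]])
    then have "(zeta u, sub A E u) \<in> th A" using sO by (simp add: zeta_def imult_one_left)
    then show ?thesis using th_trans sub_th[OF A EO Eth u] by blast
  qed
  have zeq: "zeta s = zeta t"
  proof (rule io_eqI[of _ A])
    show "zeta s \<in> Omega A" "zeta t \<in> Omega A" using EO s t sub_Omega by (auto simp: zeta_def intro!: imult_Omega)
  next
    fix T f assume vT: "valid_asg A T f"
    have T: "T \<in> finmon" and f: "f \<in> A \<rightarrow>\<^sub>E carrier T" using vT by (auto simp: valid_asg_def)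
    have fx: "idem T (E T f) \<and> (\<forall>a\<in>A. stepT T (E T f) (f a) = E T f)"
      unfolding E_def by (rule Eio_fix[OF as vT])
    have ec: "E T f \<in> carrier T" and ee: "E T f \<otimes>\<^bsub>T\<^esub> E T f = E T f" using fx by (auto simp: idem_def)
    have pw: "\<forall>a\<in>A. pw T (E T f \<otimes>\<^bsub>T\<^esub> (f a \<otimes>\<^bsub>T\<^esub> E T f)) = E T f" using fx by (simp add: stepT_def)
    have "E T f \<otimes>\<^bsub>T\<^esub> s T (\<lambda>a\<in>A. E T f \<otimes>\<^bsub>T\<^esub> (f a \<otimes>\<^bsub>T\<^esub> E T f)) =
          E T f \<otimes>\<^bsub>T\<^esub> t T (\<lambda>a\<in>A. E T f \<otimes>\<^bsub>T\<^esub> (f a \<otimes>\<^bsub>T\<^esub> E T f))"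
      by (rule group_part[OF T f ec ee pw s t val])
    then show "zeta s T f = zeta t T f" using vT by (simp add: zeta_def imult_def sub_def gE_def)
  qed
  have "(s, zeta s) \<in> th A" by (rule th_sym[OF zth[OF s]])
  moreover have "(zeta t, t) \<in> th A" by (rule zth[OF t])
  ultimately have "(s, t) \<in> th A" using zeq th_trans by metis
  then show "(s, t) \<in> provable A {eps_omega}" by (simp add: th_def)
qed



end
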